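(* Let $\Gamma$ be a group. In the category $\mathrm{Cr}\Gamma$ of crossed $\Gamma$-modules: (a) For every surjective morphism $f:(G',\mu')\to(G,\mu)$ and every morphism $h:F_{(L,\nu)}\to(G,\mu)$ from a free crossed $\Gamma$-module, there is a morphism $h':F_{(L,\nu)}\to(G',\mu')$ with $fh'=h$; consequently $\mathfrak P_\Gamma$ (retracts of free crossed $\Gamma$-modules), together with surjective morphisms, is a projective class in $\mathrm{Cr}\Gamma$. (b) For every surjective morphism $f:(G',\mu')\to(G,\mu)$ admitting a $\Gamma$-equivariant set-theoretic section and every morphism $h:F_{\Gamma(L,\nu)}\to(G,\mu)$ from a $\Gamma$-equivariant free crossed $\Gamma$-module, there is a morphism $h'$ with $fh'=h$; consequently $\mathfrak P_{\Gamma-e}$ (retracts of $\Gamma$-equivariant free crossed $\Gamma$-modules), together with surjective morphisms admitting $\Gamma$-equivariant set-theoretic sections, is a projective class in $\mathrm{Cr}\Gamma$.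
   Context: A crossed $\Gamma$-module $(G,\mu)$ is a group $G$ with an action of $\Gamma$ by automorphisms and a homomorphism $\mu:G\to\Gamma$ with $\mu({}^{\gamma}g)=\gamma\mu(g)\gamma^{-1}$ and ${}^{\mu(g)}g'=gg'g^{-1}$. Morphisms $(G,\mu)\to(G',\mu')$ are $\Gamma$-equivariant homomorphisms $f$ with $\mu'f=\mu$. Free crossed $\Gamma$-module on $(G,\mu)$: let $F(\Gamma\times G)$ be the free group on pairs $(\gamma,g)$ with $\Gamma$-action ${}^{\gamma'}(\gamma,g)=(\gamma'\gamma,g)$ and $\eta:F(\Gamma\times G)\to G$, $\eta(\gamma,g)={}^{\gamma}g$; $F_{(G,\mu)}$ is the quotient of $F(\Gamma\times G)$ by the normal subgroup generated by the Peiffer elements ${}^{\mu\eta(x)}x'\cdot x x'^{-1}x^{-1}$, with the crossed module map induced by $\mu\eta$; the canonical map $F_{(G,\mu)}\to(G,\mu)$ is surjective. $\Gamma$-equivariant free crossed $\Gamma$-module on $(G,\mu)$: let $F(G)$ be the free group on symbols $|g|$ with ${}^{\gamma}|g|=|{}^{\gamma}g|$, $\varphi:F(G)\to G$, $|g|\mapsto g$; $F_{\Gamma(G,\mu)}$ is the quotient of $F(G)$ by the normal subgroup generated by ${}^{\mu\varphi(x)}x'\cdot xx'^{-1}x^{-1}$, with crossed module map induced by $\mu\varphi$; the canonical surjection to $(G,\mu)$ has the $\Gamma$-equivariant section $g\mapsto[|g|]$. A projective class (in the sense of Eilenberg–Moore) is a class of objects $\mathfrak P$ together with a class of "$\mathfrak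 P$-epimorphisms" such that each object of $\mathfrak P$ has the lifting property against all $\mathfrak P$-epimorphisms, $\mathfrak P$ is closed under retracts, and every object receives a $\mathfrak P$-epimorphism from an object of $\mathfrak P$. *)

theory Defs
  imports "HOL-Algebra.Algebra"
begin

record ('a, 'g) xmod =
  xgrp :: "'a monoid"
  xact :: "'g \<Rightarrow> 'a \<Rightarrow> 'a"
  xmu  :: "'a \<Rightarrow> 'g"

definition crossed_module :: "'g monoid \<Rightarrow> ('a, 'g) xmod \<Rightarrow> bool" where
  "crossed_module \<Gamma> M \<longleftrightarrow>
     group (xgrp M) \<and>
     (\<forall>\<gamma>\<in>carrier \<Gamma>. xact M \<gamma> \<in> hom (xgrp M) (xgrp M)) \<and>
     (\<forall>x\<in>carrier (xgrp M). xact M \<one>\<^bsub>\<Gamma>\<^esub> x = x) \<and>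
     (\<forall>\<gamma>\<in>carrier \<Gamma>. \<forall>\<delta>\<in>carrier \<Gamma>. \<forall>x\<in>carrier (xgrp M).
        xact M (\<gamma> \<otimes>\<^bsub>\<Gamma>\<^esub> \<delta>) x = xact M \<gamma> (xact M \<delta> x)) \<and>
     xmu M \<in> hom (xgrp M) \<Gamma> \<and>
     (\<forall>\<gamma>\<in>carrier \<Gamma>. \<forall>x\<in>carrier (xgrp M).
        xmu M (xact M \<gamma> x) = \<gamma> \<otimes>\<^bsub>\<Gamma>\<^esub> xmu M x \<otimes>\<^bsub>\<Gamma>\<^esub> inv\<^bsub>\<Gamma>\<^esub> \<gamma>) \<and>
     (\<forall>x\<in>carrier (xgrp M). \<forall>y\<in>carrier (xgrp M).
        xact M (xmu M x) y = x \<otimes>\<^bsub>xgrp M\<^esub> y \<otimes>\<^bsub>xgrp M\<^esub> inv\<^bsub>xgrp M\<^esub> x)"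

text \<open>Morphisms of crossed Gamma-modules (functions considered on the carrier only).\<close>
definition xmod_hom :: "'g monoid \<Rightarrow> ('a, 'g) xmod \<Rightarrow> ('b, 'g) xmod \<Rightarrow> ('a \<Rightarrow> 'b) \<Rightarrow> bool" where
  "xmod_hom \<Gamma> M Y f \<longleftrightarrow>
     f \<in> hom (xgrp M) (xgrp Y) \<and>
     (\<forall>\<gamma>\<in>carrier \<Gamma>. \<forall>x\<in>carrier (xgrp M). f (xact M \<gamma> x) = xact Y \<gamma> (f x)) \<and>
     (\<forall>x\<in>carrier (xgrp M). xmu Y (f x) = xmu M x)"

definition xmod_surj :: "'g monoid \<Rightarrow> ('a, 'g) xmod \<Rightarrow> ('b, 'g) xmod \<Rightarrow> ('a \<Rightarrow> 'b) \<Rightarrow> bool" where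
  "xmod_surj \<Gamma> M Y f \<longleftrightarrow> xmod_hom \<Gamma> M Y f \<and> f ` carrier (xgrp M) = carrier (xgrp Y)"

definition xmod_eq_split :: "'g monoid \<Rightarrow> ('a, 'g) xmod \<Rightarrow> ('b, 'g) xmod \<Rightarrow> ('a \<Rightarrow> 'b) \<Rightarrow> bool" where
  "xmod_eq_split \<Gamma> M Y f \<longleftrightarrow> xmod_surj \<Gamma> M Y f \<and>
     (\<exists>s. s \<in> carrier (xgrp Y) \<rightarrow> carrier (xgrp M) \<and>
          (\<forall>y\<in>carrier (xgrp Y). f (s y) = y) \<and>
          (\<forall>\<gamma>\<in>carrier \<Gamma>. \<forall>y\<in>carrier (xgrp Y). s (xact Y \<gamma> y) = xact M \<gamma> (s y)))"

definition xmod_retract :: "'g monoid \<Rightarrow> ('a, 'g) xmod \<Rightarrow> ('b, 'g) xmod \<Rightarrow> bool" where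
  "xmod_retract \<Gamma> R Q \<longleftrightarrow>
     (\<exists>i r. xmod_hom \<Gamma> R Q i \<and> xmod_hom \<Gamma> Q R r \<and> (\<forall>x\<in>carrier (xgrp R). r (i x) = x))"

definition xmod_lifts :: "'g monoid \<Rightarrow> ('q, 'g) xmod \<Rightarrow> ('b, 'g) xmod \<Rightarrow> ('a, 'g) xmod \<Rightarrow> ('b \<Rightarrow> 'a) \<Rightarrow> bool" where
  "xmod_lifts \<Gamma> Q M' M f \<longleftrightarrow>
     (\<forall>h. xmod_hom \<Gamma> Q M h \<longrightarrow>
        (\<exists>h'. xmod_hom \<Gamma> Q M' h' \<and> (\<forall>x\<in>carrier (xgrp Q). f (h' x) = h x)))"

type_synonym 'x word = "('x \<times> bool) list"
  \<comment> \<open>a letter (x, False) is the generator x, (x, True) is its inverse\<close>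

definition reduced_word :: "'x word \<Rightarrow> bool" where
  "reduced_word w \<longleftrightarrow> (\<forall>i. Suc i < length w \<longrightarrow>
      \<not> (fst (w ! i) = fst (w ! Suc i) \<and> snd (w ! i) \<noteq> snd (w ! Suc i)))"

fun red_acc :: "'x word \<Rightarrow> 'x word \<Rightarrow> 'x word" where
  "red_acc acc [] = rev acc"
| "red_acc [] (b # bs) = red_acc [b] bs"
| "red_acc (a # acc) (b # bs) =
     (if fst a = fst b \<and> snd a \<noteq> snd b then red_acc acc bs else red_acc (b # a # acc) bs)"

definition reduce_word :: "'x word \<Rightarrow> 'x word" where
  "reduce_word w = red_acc [] w"

definition free_grp :: "'x set \<Rightarrow> 'x word monoid" where
  "free_grp S = \<lparr>carrier = {w. fst ` set w \<subseteq> S \<and> reduced_word w},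
                 monoid.mult = (\<lambda>u v. reduce_word (u @ v)), monoid.one = []\<rparr>"

definition eval_word :: "('a, 'b) monoid_scheme \<Rightarrow> ('x \<Rightarrow> 'a) \<Rightarrow> 'x word \<Rightarrow> 'a" where
  "eval_word G e w = foldr (\<lambda>(x, b) acc. (if b then inv\<^bsub>G\<^esub> (e x) else e x) \<otimes>\<^bsub>G\<^esub> acc) w \<one>\<^bsub>G\<^esub>"

definition normal_closure :: "('a, 'b) monoid_scheme \<Rightarrow> 'a set \<Rightarrow> 'a set" where
  "normal_closure G S = \<Inter> {N. N \<lhd> G \<and> S \<subseteq> N}"

text \<open>Generic construction: free group on generators S with a Gamma-action \<alpha>
  on generators and a Gamma-equivariant map e of generators into M;
  quotient by the normal subgroup generated by the Peiffer elements.\<close>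
definition peiffer_quot ::
  "'g monoid \<Rightarrow> ('a, 'g) xmod \<Rightarrow> 'x set \<Rightarrow> ('g \<Rightarrow> 'x \<Rightarrow> 'x) \<Rightarrow> ('x \<Rightarrow> 'a) \<Rightarrow> ('x word set, 'g) xmod" where
  "peiffer_quot \<Gamma> M S \<alpha> e =
    (let Fr = free_grp S;
         act = (\<lambda>\<gamma> w. map (\<lambda>(x, b). (\<alpha> \<gamma> x, b)) w);
         m = (\<lambda>w. xmu M (eval_word (xgrp M) e w));
         P = {act (m x) x' \<otimes>\<^bsub>Fr\<^esub> x \<otimes>\<^bsub>Fr\<^esub> inv\<^bsub>Fr\<^esub> x' \<otimes>\<^bsub>Fr\<^esub> inv\<^bsub>Fr\<^esub> x
               | x x'. x \<in> carrier Fr \<and> x' \<in> carrier Fr};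
         N = normal_closure Fr P
     in \<lparr>xgrp = Fr Mod N, xact = (\<lambda>\<gamma> C. act \<gamma> ` C), xmu = (\<lambda>C. m (SOME w. w \<in> C))\<rparr>)"

definition free_xmod :: "'g monoid \<Rightarrow> ('a, 'g) xmod \<Rightarrow> (('g \<times> 'a) word set, 'g) xmod" where
  "free_xmod \<Gamma> M = peiffer_quot \<Gamma> M (carrier \<Gamma> \<times> carrier (xgrp M))
      (\<lambda>\<gamma>' (\<gamma>, g). (\<gamma>' \<otimes>\<^bsub>\<Gamma>\<^esub> \<gamma>, g)) (\<lambda>(\<gamma>, g). xact M \<gamma> g)"

text \<open>Gamma-equivariant free crossed Gamma-module F_\<Gamma>(G,\<mu>) on symbols |g|.\<close>
definition eq_free_xmod :: "'g monoid \<Rightarrow> ('a, 'g) xmod \<Rightarrow> ('a word set, 'g) xmod" where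
  "eq_free_xmod \<Gamma> M = peiffer_quot \<Gamma> M (carrier (xgrp M)) (xact M) (\<lambda>g. g)"

text \<open>Retracts of free crossed Gamma-modules F_(L,\<nu>), with L of type 'l.\<close>
definition in_PG :: "'l itself \<Rightarrow> 'g monoid \<Rightarrow> ('q, 'g) xmod \<Rightarrow> bool" where
  "in_PG _ \<Gamma> Q \<longleftrightarrow> crossed_module \<Gamma> Q \<and>
     (\<exists>L :: ('l, 'g) xmod. crossed_module \<Gamma> L \<and> xmod_retract \<Gamma> Q (free_xmod \<Gamma> L))"

definition in_PGe :: "'l itself \<Rightarrow> 'g monoid \<Rightarrow> ('q, 'g) xmod \<Rightarrow> bool" where
  "in_PGe _ \<Gamma> Q \<longleftrightarrow> crossed_module \<Gamma> Q \<and>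
     (\<exists>L :: ('l, 'g) xmod. crossed_module \<Gamma> L \<and> xmod_retract \<Gamma> Q (eq_free_xmod \<Gamma> L))"

end

theory Submission imports Defs begin

section \<open>Free group infrastructure\<close>

definition flip :: "'x \<times> bool \<Rightarrow> 'x \<times> bool" where
  "flip a = (fst a, \<not> snd a)"

lemma flip_flip[simp]: "flip (flip a) = a"
  by (cases a) (simp add: flip_def)

lemma fst_flip[simp]: "fst (flip a) = fst a" and snd_flip[simp]: "snd (flip a) = (\<not> snd a)"
  by (simp_all add: flip_def)

lemma cancel_iff: "(fst a = fst b \<and> snd a \<noteq> snd b) \<longleftrightarrow> b = flip a"
  by (cases a; cases b) (auto simp: flip_def)

lemma cancel_iff2[simp]: "(fst a = fst b \<and> snd a = (\<not> snd b)) \<longleftrightarrow> b = flip a"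
  by (cases a; cases b) (auto simp: flip_def)

lemma cancel_iff3[simp]: "(fst a = fst b \<longrightarrow> snd a = snd b) \<longleftrightarrow> b \<noteq> flip a"
  by (cases a; cases b) (auto simp: flip_def)

definition redP :: "'x word \<Rightarrow> bool" where
  "redP w \<longleftrightarrow> \<not> (\<exists>xs a ys. w = xs @ a # flip a # ys)"

definition cstep :: "'x word \<Rightarrow> 'x word \<Rightarrow> bool" where
  "cstep u v \<longleftrightarrow> (\<exists>xs a ys. u = xs @ a # flip a # ys \<and> v = xs @ ys)"

abbreviation creds :: "'x word \<Rightarrow> 'x word \<Rightarrow> bool" where
  "creds \<equiv> cstep\<^sup>*\<^sup>*"

lemma reduced_word_iff: "reduced_word w \<longleftrightarrow> redP w"
proof
  assume r: "reduced_word w"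
  show "redP w"
  proof (unfold redP_def, rule notI)
    assume "\<exists>xs a ys. w = xs @ a # flip a # ys"
    then obtain xs a ys where w: "w = xs @ a # flip a # ys" by blast
    have "Suc (length xs) < length w" using w by simp
    moreover have "w ! length xs = a" "w ! Suc (length xs) = flip a"
      using w by (simp_all add: nth_append)
    ultimately show False using r unfolding reduced_word_def by (metis cancel_iff)
  qed
next
  assume r: "redP w"
  show "reduced_word w"
  proof (unfold reduced_word_def, intro allI impI notI)
    fix i assume i: "Suc i < length w" and c: "fst (w ! i) = fst (w ! Suc i) \<and> snd (w ! i) \<noteq> snd (w ! Suc i)"
    have "w = take i w @ w ! i # w ! Suc i # drop (Suc (Suc i)) w"
      using i by (metis Cons_nth_drop_Suc Suc_lessD append_take_drop_id)
    moreover have "w ! Suc i = flip (w ! i)" using c cancel_iff by blast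
    ultimately show False using r unfolding redP_def by metis
  qed
qed

lemma redP_appendD: "redP (xs @ ys) \<Longrightarrow> redP xs \<and> redP ys"
  unfolding redP_def by (metis append.assoc append_Cons)

lemma redP_Nil[simp]: "redP []" and redP_single[simp]: "redP [a]"
  unfolding redP_def by (auto simp: append_eq_Cons_conv Cons_eq_append_conv)

lemma redP_snoc2:
  assumes "redP (zs @ [a])" "b \<noteq> flip a"
  shows "redP (zs @ [a, b])"
proof (unfold redP_def, rule notI)
  assume "\<exists>xs c ys. zs @ [a, b] = xs @ c # flip c # ys"
  then obtain xs c ys where e: "zs @ [a, b] = xs @ c # flip c # ys" by blast
  hence e': "b # a # rev zs = rev ys @ flip c # c # rev xs"
    by (metis rev.simps append.assoc append_Cons append_Nil rev_append)
  show False
  proof (cases "rev ys")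
    case Nil
    then show ?thesis using e' assms(2) by simp
  next
    case (Cons y r)
    then have "a # rev zs = r @ flip c # c # rev xs" using e' by simp
    hence "rev (a # rev zs) = rev (r @ flip c # c # rev xs)" by simp
    hence "zs @ [a] = xs @ c # flip c # rev r" by simp
    then show ?thesis using assms(1) unfolding redP_def by blast
  qed
qed

lemma red_acc_append: "red_acc acc (xs @ ys) = red_acc (rev (red_acc acc xs)) ys"
  by (induction acc xs rule: red_acc.induct) auto

lemma red_acc_id: "redP (rev acc @ w) \<Longrightarrow> red_acc acc w = rev acc @ w"
proof (induction acc w rule: red_acc.induct)
  case (3 a acc b bs)
  have "b \<noteq> flip a"
    using "3.prems" unfolding redP_def by (metis append_Cons append_Nil append.assoc rev.simps(2))
  hence nc: "\<not> (fst a = fst b \<and> snd a \<noteq> snd b)" by (simp add: cancel_iff)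
  have "red_acc (b # a # acc) bs = rev (b # a # acc) @ bs"
    using "3.IH"(2)[OF nc] "3.prems" by simp
  then show ?case using nc by simp
qed auto

lemma red_acc_creds: "creds (rev acc @ w) (red_acc acc w)"
proof (induction acc w rule: red_acc.induct)
  case (3 a acc b bs)
  show ?case
  proof (cases "fst a = fst b \<and> snd a \<noteq> snd b")
    case True
    hence b: "b = flip a" by (simp add: cancel_iff)
    have "cstep (rev (a # acc) @ b # bs) (rev acc @ bs)"
      unfolding cstep_def b by (rule exI[of _ "rev acc"]) auto
    then show ?thesis using "3.IH"(1)[OF True] True b by simp
  next
    case False
    then show ?thesis using "3.IH"(2)[OF False] by simp
  qed
qed auto

lemma red_acc_redP: "redP (rev acc) \<Longrightarrow> redP (red_acc acc w)"
proof (induction acc w rule: red_acc.induct)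
  case (3 a acc b bs)
  show ?case
  proof (cases "fst a = fst b \<and> snd a \<noteq> snd b")
    case True
    have "redP (rev acc)" using "3.prems" redP_appendD by (metis rev.simps(2))
    then show ?thesis using "3.IH"(1)[OF True] True by simp
  next
    case False
    hence "b \<noteq> flip a" by (simp add: cancel_iff)
    hence "redP (rev acc @ [a, b])" using redP_snoc2 "3.prems" by (metis rev.simps(2))
    then show ?thesis using "3.IH"(2)[OF False] False by simp
  qed
qed auto

lemma red_acc_set: "set (red_acc acc w) \<subseteq> set acc \<union> set w"
  by (induction acc w rule: red_acc.induct) auto

lemma red_acc_cancel:
  assumes "redP (rev st)"
  shows "red_acc st (a # flip a # ys) = red_acc st ys"
proof (cases st)
  case Nil
  then show ?thesis by (simp add: cancel_iff)
next
  case (Cons b rest)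
  show ?thesis
  proof (cases "a = flip b")
    case True
    hence fa: "flip a = b" by simp
    show ?thesis
    proof (cases rest)
      case Nil
      then show ?thesis using Cons True fa by (simp add: cancel_iff)
    next
      case (Cons c r)
      have "b \<noteq> flip c"
      proof
        assume "b = flip c"
        hence "rev st = rev r @ c # flip c # []" using Cons \<open>st = b # rest\<close> by simp
        thus False using assms unfolding redP_def by blast
      qed
      then show ?thesis using Cons \<open>st = b # rest\<close> True fa by (simp add: cancel_iff)
    qed
  next
    case False
    hence "\<not> (fst b = fst a \<and> snd b \<noteq> snd a)" by (metis cancel_iff)
    then show ?thesis using Cons by (simp add: cancel_iff)
  qed
qed

lemma cstep_reduce: "cstep u v \<Longrightarrow> reduce_word u = reduce_word v"
proof -
  assume "cstep u v"
  then obtain xs a ys where u: "u = xs @ a # flip a # ys" and v: "v = xs @ ys"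
    unfolding cstep_def by blast
  have r: "redP (rev (rev (red_acc [] xs)))" by (simp add: red_acc_redP)
  show ?thesis unfolding reduce_word_def u v red_acc_append[of _ xs]
    using red_acc_cancel[OF r] by simp
qed

lemma creds_reduce: "creds u v \<Longrightarrow> reduce_word u = reduce_word v"
  by (induction rule: rtranclp_induct) (auto dest: cstep_reduce)

lemma reduce_redP: "redP w \<Longrightarrow> reduce_word w = w"
  unfolding reduce_word_def using red_acc_id[of "[]" w] by simp

lemma reduce_unique: "creds u v \<Longrightarrow> redP v \<Longrightarrow> reduce_word u = v"
  using creds_reduce reduce_redP by metis

lemma creds_reduce_word: "creds w (reduce_word w)"
  unfolding reduce_word_def using red_acc_creds[of "[]" w] by simp

lemma redP_reduce: "redP (reduce_word w)"
  unfolding reduce_word_def by (rule red_acc_redP) simp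

lemma set_reduce: "set (reduce_word w) \<subseteq> set w"
  unfolding reduce_word_def using red_acc_set[of "[]" w] by simp

lemma cstep_ctxt: "cstep u v \<Longrightarrow> cstep (p @ u @ q) (p @ v @ q)"
  unfolding cstep_def by (metis append.assoc append_Cons)

lemma creds_ctxt: "creds u v \<Longrightarrow> creds (p @ u @ q) (p @ v @ q)"
proof (induction rule: rtranclp_induct)
  case (step y z)
  then show ?case using cstep_ctxt by (metis rtranclp.rtrancl_into_rtrancl)
qed simp

lemma reduce_append_left: "reduce_word (reduce_word u @ v) = reduce_word (u @ v)"
  using creds_reduce[OF creds_ctxt[OF creds_reduce_word, of "[]" u v]] by simp

lemma reduce_append_right: "reduce_word (u @ reduce_word v) = reduce_word (u @ v)"
  using creds_reduce[OF creds_ctxt[OF creds_reduce_word, of u v "[]"]] by simp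

definition winv :: "'x word \<Rightarrow> 'x word" where
  "winv w = rev (map flip w)"

lemma creds_winv: "creds (winv w @ w) []"
proof (induction w)
  case (Cons a w)
  have "winv (a # w) @ a # w = winv w @ flip a # flip (flip a) # w"
    by (simp add: winv_def)
  hence "cstep (winv (a # w) @ a # w) (winv w @ w)"
    unfolding cstep_def by metis
  then show ?case using Cons by (metis converse_rtranclp_into_rtranclp)
qed (simp add: winv_def)

lemma creds_winv2: "creds (w @ winv w) []"
  using creds_winv[of "winv w"] by (simp add: winv_def rev_map comp_def)

lemma redP_winv: "redP w \<Longrightarrow> redP (winv w)"
proof (unfold redP_def winv_def, clarify)
  fix xs a ys assume r: "\<not> (\<exists>xs a ys. w = xs @ a # flip a # ys)"
    and e: "rev (map flip w) = xs @ a # flip a # ys"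
  have "map flip w = rev ys @ [flip a, a] @ rev xs" using e
    by (metis append.assoc append_Cons append_Nil rev.simps rev_append rev_rev_ident)
  hence "map flip (map flip w) = map flip (rev ys @ [flip a, a] @ rev xs)" by simp
  hence "w = map flip (rev ys) @ a # flip a # map flip (rev xs)" by (simp add: comp_def)
  thus False using r by blast
qed

lemma set_winv: "fst ` set (winv w) = fst ` set w"
  by (force simp: winv_def)

lemma winv_carrier: "x \<in> {w. fst ` set w \<subseteq> S \<and> redP w} \<Longrightarrow> winv x \<in> {w. fst ` set w \<subseteq> S \<and> redP w}"
  using redP_winv set_winv by (metis (mono_tags, lifting) mem_Collect_eq)

lemma carrier_free_grp: "carrier (free_grp S) = {w. fst ` set w \<subseteq> S \<and> redP w}"
  by (simp add: free_grp_def reduced_word_iff)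

lemma mult_free_grp: "x \<otimes>\<^bsub>free_grp S\<^esub> y = reduce_word (x @ y)"
  by (simp add: free_grp_def)

lemma one_free_grp: "\<one>\<^bsub>free_grp S\<^esub> = []"
  by (simp add: free_grp_def)

lemma group_free_grp: "group (free_grp S)"
proof (rule groupI)
  fix x y assume "x \<in> carrier (free_grp S)" "y \<in> carrier (free_grp S)"
  then show "x \<otimes>\<^bsub>free_grp S\<^esub> y \<in> carrier (free_grp S)"
    using set_reduce[of "x @ y"] redP_reduce[of "x @ y"]
    by (fastforce simp: carrier_free_grp mult_free_grp)
next
  show "\<one>\<^bsub>free_grp S\<^esub> \<in> carrier (free_grp S)"
    by (simp add: carrier_free_grp one_free_grp)
next
  fix x y z
  show "x \<otimes>\<^bsub>free_grp S\<^esub> y \<otimes>\<^bsub>free_grp S\<^esub> z = x \<otimes>\<^bsub>free_grp S\<^esub> (y \<otimes>\<^bsub>free_grp S\<^esub> z)"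
    by (simp add: mult_free_grp reduce_append_left reduce_append_right)
next
  fix x assume "x \<in> carrier (free_grp S)"
  then show "\<one>\<^bsub>free_grp S\<^esub> \<otimes>\<^bsub>free_grp S\<^esub> x = x"
    by (simp add: carrier_free_grp mult_free_grp one_free_grp reduce_redP)
next
  fix x assume x: "x \<in> carrier (free_grp S)"
  show "\<exists>y\<in>carrier (free_grp S). y \<otimes>\<^bsub>free_grp S\<^esub> x = \<one>\<^bsub>free_grp S\<^esub>"
  proof (intro bexI)
    show "winv x \<otimes>\<^bsub>free_grp S\<^esub> x = \<one>\<^bsub>free_grp S\<^esub>"
      using reduce_unique[OF creds_winv[of x]] by (simp add: mult_free_grp one_free_grp)
    show "winv x \<in> carrier (free_grp S)"
      using x winv_carrier by (simp add: carrier_free_grp)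
  qed
qed

lemma inv_free_grp: "x \<in> carrier (free_grp S) \<Longrightarrow> inv\<^bsub>free_grp S\<^esub> x = winv x"
proof -
  assume x: "x \<in> carrier (free_grp S)"
  have "winv x \<in> carrier (free_grp S)"
    using x winv_carrier by (simp add: carrier_free_grp)
  moreover have "winv x \<otimes>\<^bsub>free_grp S\<^esub> x = \<one>\<^bsub>free_grp S\<^esub>"
    using reduce_unique[OF creds_winv[of x]] by (simp add: mult_free_grp one_free_grp)
  ultimately show ?thesis using group.inv_equality[OF group_free_grp] x by metis
qed

section \<open>Evaluation of words\<close>

definition lett :: "('a, 'b) monoid_scheme \<Rightarrow> ('x \<Rightarrow> 'a) \<Rightarrow> 'x \<times> bool \<Rightarrow> 'a" where
  "lett G e a = (if snd a then inv\<^bsub>G\<^esub> (e (fst a)) else e (fst a))"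

lemma eval_Nil[simp]: "eval_word G e [] = \<one>\<^bsub>G\<^esub>"
  by (simp add: eval_word_def)

lemma eval_Cons[simp]: "eval_word G e (a # w) = lett G e a \<otimes>\<^bsub>G\<^esub> eval_word G e w"
  by (cases a) (simp add: eval_word_def lett_def)

context group begin

lemma lett_closed: "e (fst a) \<in> carrier G \<Longrightarrow> lett G e a \<in> carrier G"
  by (simp add: lett_def)

lemma eval_closed: "(\<forall>a\<in>set w. e (fst a) \<in> carrier G) \<Longrightarrow> eval_word G e w \<in> carrier G"
  by (induction w) (auto intro: lett_closed)

lemma eval_append: "(\<forall>a\<in>set u. e (fst a) \<in> carrier G) \<Longrightarrow> (\<forall>a\<in>set v. e (fst a) \<in> carrier G) \<Longrightarrow>
   eval_word G e (u @ v) = eval_word G e u \<otimes> eval_word G e v"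
  by (induction u) (auto simp: m_assoc lett_closed eval_closed)

lemma lett_flip: "e (fst a) \<in> carrier G \<Longrightarrow> lett G e a \<otimes> lett G e (flip a) = \<one>"
  by (simp add: lett_def)

lemma eval_cstep: "cstep u v \<Longrightarrow> (\<forall>a\<in>set u. e (fst a) \<in> carrier G) \<Longrightarrow>
   eval_word G e u = eval_word G e v \<and> (\<forall>a\<in>set v. e (fst a) \<in> carrier G)"
proof -
  assume "cstep u v" and c: "\<forall>a\<in>set u. e (fst a) \<in> carrier G"
  then obtain xs a ys where u: "u = xs @ a # flip a # ys" and v: "v = xs @ ys"
    unfolding cstep_def by blast
  have cx: "\<forall>a\<in>set xs. e (fst a) \<in> carrier G" and cy: "\<forall>a\<in>set ys. e (fst a) \<in> carrier G"
    and ca: "e (fst a) \<in> carrier G" using c u by auto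
  have "eval_word G e u = eval_word G e xs \<otimes> (lett G e a \<otimes> lett G e (flip a) \<otimes> eval_word G e ys)"
    using u cx cy ca by (simp add: eval_append m_assoc lett_closed eval_closed)
  also have "\<dots> = eval_word G e v" using v cx cy ca by (simp add: lett_flip eval_append eval_closed)
  finally show ?thesis using cx cy v by auto
qed

lemma eval_creds: "creds u v \<Longrightarrow> (\<forall>a\<in>set u. e (fst a) \<in> carrier G) \<Longrightarrow>
   eval_word G e u = eval_word G e v \<and> (\<forall>a\<in>set v. e (fst a) \<in> carrier G)"
proof (induction rule: rtranclp_induct)
  case (step y z)
  then show ?case using eval_cstep[of y z e] by argo
qed simp

lemma eval_reduce: "(\<forall>a\<in>set w. e (fst a) \<in> carrier G) \<Longrightarrow> eval_word G e (reduce_word w) = eval_word G e w"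
  using eval_creds[OF creds_reduce_word, of w e] by argo

lemma eval_hom: "e \<in> S \<rightarrow> carrier G \<Longrightarrow> eval_word G e \<in> hom (free_grp S) G"
proof (rule homI)
  assume e: "e \<in> S \<rightarrow> carrier G"
  have c: "\<And>w. w \<in> carrier (free_grp S) \<Longrightarrow> \<forall>a\<in>set w. e (fst a) \<in> carrier G"
    using e by (auto simp: carrier_free_grp)
  show "\<And>x. x \<in> carrier (free_grp S) \<Longrightarrow> eval_word G e x \<in> carrier G"
    using c eval_closed by blast
  fix x y assume "x \<in> carrier (free_grp S)" "y \<in> carrier (free_grp S)"
  then show "eval_word G e (x \<otimes>\<^bsub>free_grp S\<^esub> y) = eval_word G e x \<otimes> eval_word G e y"
    using c[of x] c[of y] eval_reduce[of "x @ y" e] eval_append[of x e y]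
    by (simp add: mult_free_grp ball_Un)
qed

end

lemma eval_hom_comm:
  assumes "group G" "group H" "h \<in> hom G H" "\<forall>a\<in>set w. e (fst a) \<in> carrier G"
  shows "h (eval_word G e w) = eval_word H (h \<circ> e) w"
  using assms(4)
proof (induction w)
  case Nil
  have gh: "group_hom G H h" using assms by (intro group_hom.intro group_hom_axioms.intro)
  show ?case using group_hom.hom_one[OF gh] by simp
next
  case (Cons a w)
  have gh: "group_hom G H h" using assms by (intro group_hom.intro group_hom_axioms.intro)
  have ea: "e (fst a) \<in> carrier G" using Cons.prems by simp
  have cw: "\<forall>a\<in>set w. e (fst a) \<in> carrier G" using Cons.prems by simp
  have l: "lett G e a \<in> carrier G" by (rule group.lett_closed[OF assms(1), of e a, OF ea])
  have ev: "eval_word G e w \<in> carrier G" by (rule group.eval_closed[OF assms(1), of w e, OF cw])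
  have "h (eval_word G e (a # w)) = h (lett G e a) \<otimes>\<^bsub>H\<^esub> h (eval_word G e w)"
    using hom_mult[OF assms(3) l ev] by simp
  moreover have "h (lett G e a) = lett H (h \<circ> e) a"
    using group_hom.hom_inv[OF gh ea] unfolding lett_def by simp
  ultimately show ?case using Cons.IH[OF cw] by (simp add: comp_def)
qed

lemma eval_single: "group G \<Longrightarrow> e x \<in> carrier G \<Longrightarrow> eval_word G e [(x, False)] = e x"
proof -
  assume G: "group G" and ex: "e x \<in> carrier G"
  have "eval_word G e [(x, False)] = e x \<otimes>\<^bsub>G\<^esub> \<one>\<^bsub>G\<^esub>" unfolding eval_Cons eval_Nil lett_def by simp
  also have "\<dots> = e x" by (rule monoid.r_one[OF group.is_monoid[OF G] ex])
  finally show ?thesis .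
qed

section \<open>Action on words\<close>

definition wact :: "('g \<Rightarrow> 'x \<Rightarrow> 'x) \<Rightarrow> 'g \<Rightarrow> 'x word \<Rightarrow> 'x word" where
  "wact \<alpha> \<gamma> w = map (\<lambda>(x, b). (\<alpha> \<gamma> x, b)) w"

lemma wact_Nil[simp]: "wact \<alpha> \<gamma> [] = []" and wact_Cons[simp]: "wact \<alpha> \<gamma> (a # w) = (\<alpha> \<gamma> (fst a), snd a) # wact \<alpha> \<gamma> w"
  by (auto simp: wact_def split: prod.split)

lemma wact_append[simp]: "wact \<alpha> \<gamma> (u @ v) = wact \<alpha> \<gamma> u @ wact \<alpha> \<gamma> v"
  by (simp add: wact_def)

lemma set_wact: "fst ` set (wact \<alpha> \<gamma> w) = \<alpha> \<gamma> ` fst ` set w"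
  by (induction w) auto

lemma wact_cstep: "cstep u v \<Longrightarrow> cstep (wact \<alpha> \<gamma> u) (wact \<alpha> \<gamma> v)"
proof -
  assume "cstep u v"
  then obtain xs a ys where u: "u = xs @ a # flip a # ys" and v: "v = xs @ ys"
    unfolding cstep_def by blast
  have "wact \<alpha> \<gamma> u = wact \<alpha> \<gamma> xs @ (\<alpha> \<gamma> (fst a), snd a) # flip (\<alpha> \<gamma> (fst a), snd a) # wact \<alpha> \<gamma> ys"
    using u by (simp add: flip_def)
  thus ?thesis using v unfolding cstep_def
    by (intro exI[of _ "wact \<alpha> \<gamma> xs"] exI[of _ "(\<alpha> \<gamma> (fst a), snd a)"] exI[of _ "wact \<alpha> \<gamma> ys"]) simp
qed

lemma wact_creds: "creds u v \<Longrightarrow> creds (wact \<alpha> \<gamma> u) (wact \<alpha> \<gamma> v)"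
proof (induction rule: rtranclp_induct)
  case (step y z)
  then show ?case using wact_cstep by (metis rtranclp.rtrancl_into_rtrancl)
qed simp

lemma wact_redP:
  assumes "redP w" "inj_on (\<alpha> \<gamma>) S" "fst ` set w \<subseteq> S"
  shows "redP (wact \<alpha> \<gamma> w)"
proof (unfold redP_def, rule notI)
  assume "\<exists>xs c ys. wact \<alpha> \<gamma> w = xs @ c # flip c # ys"
  then obtain xs c ys where e: "wact \<alpha> \<gamma> w = xs @ c # flip c # ys" by blast
  let ?i = "length xs"
  have len: "Suc ?i < length w" using arg_cong[OF e, of length] by (simp add: wact_def)
  have n1: "wact \<alpha> \<gamma> w ! ?i = c" and n2: "wact \<alpha> \<gamma> w ! Suc ?i = flip c"
    using e by (simp_all add: nth_append)
  let ?a = "w ! ?i" and ?b = "w ! Suc ?i"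
  have ia: "(\<alpha> \<gamma> (fst ?a), snd ?a) = c" using n1 len
    by (simp add: wact_def case_prod_beta)
  have ib: "(\<alpha> \<gamma> (fst ?b), snd ?b) = flip c" using n2 len
    by (simp add: wact_def case_prod_beta)
  have "?a \<in> set w" "?b \<in> set w" using len by auto
  hence "fst ?a \<in> S" "fst ?b \<in> S" using assms(3) by auto
  moreover have "\<alpha> \<gamma> (fst ?a) = \<alpha> \<gamma> (fst ?b)" using ia ib by (auto simp: flip_def)
  ultimately have "fst ?a = fst ?b" using assms(2) by (meson inj_onD)
  moreover have "snd ?b = (\<not> snd ?a)" using ia ib by (auto simp: flip_def)
  ultimately have "?b = flip ?a" by (simp add: flip_def prod_eq_iff)
  moreover have "w = take ?i w @ ?a # ?b # drop (Suc (Suc ?i)) w"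
    using len by (metis Cons_nth_drop_Suc Suc_lessD append_take_drop_id)
  ultimately show False using assms(1) unfolding redP_def by metis
qed

lemma wact_reduce:
  assumes "inj_on (\<alpha> \<gamma>) S" "fst ` set w \<subseteq> S"
  shows "reduce_word (wact \<alpha> \<gamma> w) = wact \<alpha> \<gamma> (reduce_word w)"
proof (rule reduce_unique)
  show "creds (wact \<alpha> \<gamma> w) (wact \<alpha> \<gamma> (reduce_word w))" by (rule wact_creds[OF creds_reduce_word])
  show "redP (wact \<alpha> \<gamma> (reduce_word w))"
    using wact_redP[where \<alpha>=\<alpha> and \<gamma>=\<gamma> and S=S, OF redP_reduce assms(1)] set_reduce assms(2) by (metis image_mono order_trans)
qed

lemma wact_hom:
  assumes "inj_on (\<alpha> \<gamma>) S" "\<alpha> \<gamma> ` S \<subseteq> S"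
  shows "wact \<alpha> \<gamma> \<in> hom (free_grp S) (free_grp S)"
proof (rule homI)
  fix x assume x: "x \<in> carrier (free_grp S)"
  have "fst ` set (wact \<alpha> \<gamma> x) \<subseteq> S"
    using x set_wact[of \<alpha> \<gamma> x] assms(2) by (simp add: carrier_free_grp) (metis image_mono order_trans)
  then show "wact \<alpha> \<gamma> x \<in> carrier (free_grp S)"
    using wact_redP[where \<alpha>=\<alpha> and \<gamma>=\<gamma> and S=S, OF _ assms(1)] x
    by (simp add: carrier_free_grp)
next
  fix x y assume "x \<in> carrier (free_grp S)" "y \<in> carrier (free_grp S)"
  then show "wact \<alpha> \<gamma> (x \<otimes>\<^bsub>free_grp S\<^esub> y) = wact \<alpha> \<gamma> x \<otimes>\<^bsub>free_grp S\<^esub> wact \<alpha> \<gamma> y"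
    using wact_reduce[where \<alpha>=\<alpha> and \<gamma>=\<gamma> and S=S and w="x @ y", OF assms(1)] by (auto simp: mult_free_grp carrier_free_grp image_Un)
qed

lemma wact_comp: "(\<And>x. x \<in> fst ` set w \<Longrightarrow> \<alpha> g x = \<alpha> h (\<alpha> k x)) \<Longrightarrow> wact \<alpha> g w = wact \<alpha> h (wact \<alpha> k w)"
  by (induction w) auto

lemma wact_id: "(\<And>x. x \<in> fst ` set w \<Longrightarrow> \<alpha> g x = x) \<Longrightarrow> wact \<alpha> g w = w"
  by (induction w) auto

lemma eval_wact:
  assumes "group H" "f \<in> hom H H" "\<forall>a\<in>set w. \<phi> (fst a) \<in> carrier H"
    "\<forall>a\<in>set w. \<phi> (\<alpha> \<gamma> (fst a)) = f (\<phi> (fst a))"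
  shows "eval_word H \<phi> (wact \<alpha> \<gamma> w) = f (eval_word H \<phi> w)"
proof -
  have "eval_word H \<phi> (wact \<alpha> \<gamma> w) = eval_word H (f \<circ> \<phi>) w"
    using assms(4) by (induction w) (auto simp: lett_def)
  thus ?thesis using eval_hom_comm[OF assms(1) assms(1) assms(2) assms(3)] by simp
qed

lemma eval_cong: "(\<forall>a\<in>set w. f (fst a) = g (fst a)) \<Longrightarrow> eval_word G f w = eval_word G g w"
  by (induction w) (auto simp: lett_def)

section \<open>Normal closure\<close>

lemma normal_closure_normal:
  assumes "group G" "A \<subseteq> carrier G"
  shows "normal_closure G A \<lhd> G" "A \<subseteq> normal_closure G A"
proof -
  interpret G: group G by fact
  let ?F = "{N. N \<lhd> G \<and> A \<subseteq> N}"
  have "carrier G \<lhd> G" by (rule G.normal_invI[OF G.subgroup_self]) simp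
  hence cG: "carrier G \<in> ?F" using assms(2) by blast
  have sg: "subgroup (\<Inter>?F) G"
  proof (rule G.subgroups_Inter)
    show "\<And>H. H \<in> ?F \<Longrightarrow> subgroup H G" using normal_imp_subgroup by blast
    show "?F \<noteq> {}" using cG by blast
  qed
  have "\<And>x h. x \<in> carrier G \<Longrightarrow> h \<in> \<Inter>?F \<Longrightarrow> x \<otimes>\<^bsub>G\<^esub> h \<otimes>\<^bsub>G\<^esub> inv\<^bsub>G\<^esub> x \<in> \<Inter>?F"
  proof -
    fix x h assume x: "x \<in> carrier G" and h: "h \<in> \<Inter>?F"
    show "x \<otimes>\<^bsub>G\<^esub> h \<otimes>\<^bsub>G\<^esub> inv\<^bsub>G\<^esub> x \<in> \<Inter>?F"
    proof (rule InterI)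
      fix K assume K: "K \<in> ?F"
      hence "h \<in> K" using h by blast
      thus "x \<otimes>\<^bsub>G\<^esub> h \<otimes>\<^bsub>G\<^esub> inv\<^bsub>G\<^esub> x \<in> K" using K x G.normal_invE(2) by blast
    qed
  qed
  then show "normal_closure G A \<lhd> G" unfolding normal_closure_def
    using G.normal_invI[OF sg] by blast
  show "A \<subseteq> normal_closure G A" unfolding normal_closure_def by blast
qed

lemma normal_closure_least: "K \<lhd> G \<Longrightarrow> A \<subseteq> K \<Longrightarrow> normal_closure G A \<subseteq> K"
  unfolding normal_closure_def by auto

lemma (in group) canc1: "x \<in> carrier G \<Longrightarrow> y \<in> carrier G \<Longrightarrow> inv x \<otimes> (x \<otimes> y) = y"
  by (simp add: m_assoc[symmetric])
lemma (in group) canc2: "x \<in> carrier G \<Longrightarrow> y \<in> carrier G \<Longrightarrow> x \<otimes> (inv x \<otimes> y) = y"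
  by (simp add: m_assoc[symmetric])
lemma (in group) peiffer_alg: "a \<in> carrier G \<Longrightarrow> b \<in> carrier G \<Longrightarrow> a \<otimes> b \<otimes> inv a \<otimes> a \<otimes> inv b \<otimes> inv a = \<one>"
  by (simp add: m_assoc)
lemma (in group) peiffer_alg2: "a \<in> carrier G \<Longrightarrow> w \<in> carrier G \<Longrightarrow> v \<in> carrier G \<Longrightarrow>
  a \<otimes> w \<otimes> inv v \<otimes> inv w \<otimes> (w \<otimes> v \<otimes> inv w) = a"
  by (simp add: m_assoc canc1 canc2)

definition qlift :: "('w \<Rightarrow> 'b) \<Rightarrow> 'w set \<Rightarrow> 'b" where
  "qlift \<psi> C = \<psi> (SOME v. v \<in> C)"

section \<open>The Peiffer quotient\<close>

locale pq =
  fixes \<Gamma> :: "'g monoid" and M :: "('a, 'g) xmod" and S :: "'x set"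
    and \<alpha> :: "'g \<Rightarrow> 'x \<Rightarrow> 'x" and e :: "'x \<Rightarrow> 'a"
  assumes grpG: "group \<Gamma>" and cmM: "crossed_module \<Gamma> M"
    and \<alpha>_closed: "\<And>\<gamma> x. \<gamma> \<in> carrier \<Gamma> \<Longrightarrow> x \<in> S \<Longrightarrow> \<alpha> \<gamma> x \<in> S"
    and \<alpha>_one: "\<And>x. x \<in> S \<Longrightarrow> \<alpha> \<one>\<^bsub>\<Gamma>\<^esub> x = x"
    and \<alpha>_mult: "\<And>\<gamma> \<delta> x. \<gamma> \<in> carrier \<Gamma> \<Longrightarrow> \<delta> \<in> carrier \<Gamma> \<Longrightarrow> x \<in> S \<Longrightarrow>
        \<alpha> (\<gamma> \<otimes>\<^bsub>\<Gamma>\<^esub> \<delta>) x = \<alpha> \<gamma> (\<alpha> \<delta> x)"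
    and e_closed: "\<And>x. x \<in> S \<Longrightarrow> e x \<in> carrier (xgrp M)"
    and e_equiv: "\<And>\<gamma> x. \<gamma> \<in> carrier \<Gamma> \<Longrightarrow> x \<in> S \<Longrightarrow> e (\<alpha> \<gamma> x) = xact M \<gamma> (e x)"
begin

abbreviation "Fr \<equiv> free_grp S"
abbreviation "GM \<equiv> xgrp M"

definition m :: "'x word \<Rightarrow> 'g" where
  "m w = xmu M (eval_word GM e w)"

definition P :: "'x word set" where
  "P = {wact \<alpha> (m x) x' \<otimes>\<^bsub>Fr\<^esub> x \<otimes>\<^bsub>Fr\<^esub> inv\<^bsub>Fr\<^esub> x' \<otimes>\<^bsub>Fr\<^esub> inv\<^bsub>Fr\<^esub> x
         | x x'. x \<in> carrier Fr \<and> x' \<in> carrier Fr}"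

definition N :: "'x word set" where
  "N = normal_closure Fr P"

abbreviation "Q \<equiv> peiffer_quot \<Gamma> M S \<alpha> e"

lemma Q_eq: "Q = \<lparr>xgrp = Fr Mod N, xact = (\<lambda>\<gamma> C. wact \<alpha> \<gamma> ` C), xmu = qlift m\<rparr>"
  unfolding peiffer_quot_def Let_def N_def P_def m_def wact_def qlift_def by simp

lemma xgrp_Q: "xgrp Q = Fr Mod N" and xact_Q: "xact Q = (\<lambda>\<gamma> C. wact \<alpha> \<gamma> ` C)"
  and xmu_Q: "xmu Q = qlift m"
  by (simp_all add: Q_eq)

lemma Fr_group: "group Fr" by (rule group_free_grp)

lemma GM_group: "group GM" using cmM by (simp add: crossed_module_def)

lemma xact_M_hom: "\<gamma> \<in> carrier \<Gamma> \<Longrightarrow> xact M \<gamma> \<in> hom GM GM"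
  using cmM by (simp add: crossed_module_def)

lemma xmu_M_hom: "xmu M \<in> hom GM \<Gamma>"
  using cmM by (simp add: crossed_module_def)

lemma xmu_M_act: "\<gamma> \<in> carrier \<Gamma> \<Longrightarrow> x \<in> carrier GM \<Longrightarrow>
   xmu M (xact M \<gamma> x) = \<gamma> \<otimes>\<^bsub>\<Gamma>\<^esub> xmu M x \<otimes>\<^bsub>\<Gamma>\<^esub> inv\<^bsub>\<Gamma>\<^esub> \<gamma>"
  using cmM by (simp add: crossed_module_def)

lemma \<alpha>_inj: "\<gamma> \<in> carrier \<Gamma> \<Longrightarrow> inj_on (\<alpha> \<gamma>) S"
proof (rule inj_onI)
  fix x y assume g: "\<gamma> \<in> carrier \<Gamma>" and xy: "x \<in> S" "y \<in> S" "\<alpha> \<gamma> x = \<alpha> \<gamma> y"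
  have ig: "inv\<^bsub>\<Gamma>\<^esub> \<gamma> \<in> carrier \<Gamma>" using g grpG by (simp add: group.inv_closed)
  have "\<And>z. z \<in> S \<Longrightarrow> \<alpha> (inv\<^bsub>\<Gamma>\<^esub> \<gamma>) (\<alpha> \<gamma> z) = z"
    using \<alpha>_mult[OF ig g] \<alpha>_one g grpG by (metis group.l_inv)
  thus "x = y" using xy by metis
qed

lemma act_hom: "\<gamma> \<in> carrier \<Gamma> \<Longrightarrow> wact \<alpha> \<gamma> \<in> hom Fr Fr"
  by (rule wact_hom[OF \<alpha>_inj]) (auto intro: \<alpha>_closed)

lemma act_carrier: "\<gamma> \<in> carrier \<Gamma> \<Longrightarrow> w \<in> carrier Fr \<Longrightarrow> wact \<alpha> \<gamma> w \<in> carrier Fr"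
  by (rule hom_in_carrier[OF act_hom])

lemma act_mult: "\<gamma> \<in> carrier \<Gamma> \<Longrightarrow> u \<in> carrier Fr \<Longrightarrow> v \<in> carrier Fr \<Longrightarrow>
   wact \<alpha> \<gamma> (u \<otimes>\<^bsub>Fr\<^esub> v) = wact \<alpha> \<gamma> u \<otimes>\<^bsub>Fr\<^esub> wact \<alpha> \<gamma> v"
  by (rule hom_mult[OF act_hom])

lemma act_grp_hom: "\<gamma> \<in> carrier \<Gamma> \<Longrightarrow> group_hom Fr Fr (wact \<alpha> \<gamma>)"
  by (intro group_hom.intro group_hom_axioms.intro Fr_group act_hom)

lemma act_inv: "\<gamma> \<in> carrier \<Gamma> \<Longrightarrow> u \<in> carrier Fr \<Longrightarrow>
   wact \<alpha> \<gamma> (inv\<^bsub>Fr\<^esub> u) = inv\<^bsub>Fr\<^esub> (wact \<alpha> \<gamma> u)"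
  by (rule group_hom.hom_inv[OF act_grp_hom])

lemma letters_S: "w \<in> carrier Fr \<Longrightarrow> a \<in> set w \<Longrightarrow> fst a \<in> S"
  by (auto simp: carrier_free_grp)

lemma letters_S': "w \<in> carrier Fr \<Longrightarrow> x \<in> fst ` set w \<Longrightarrow> x \<in> S"
  by (auto simp: carrier_free_grp)

lemma act_comp: "\<gamma> \<in> carrier \<Gamma> \<Longrightarrow> \<delta> \<in> carrier \<Gamma> \<Longrightarrow> w \<in> carrier Fr \<Longrightarrow>
   wact \<alpha> (\<gamma> \<otimes>\<^bsub>\<Gamma>\<^esub> \<delta>) w = wact \<alpha> \<gamma> (wact \<alpha> \<delta> w)"
proof (rule wact_comp)
  fix x assume "\<gamma> \<in> carrier \<Gamma>" "\<delta> \<in> carrier \<Gamma>" "w \<in> carrier Fr" "x \<in> fst ` set w"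
  then show "\<alpha> (\<gamma> \<otimes>\<^bsub>\<Gamma>\<^esub> \<delta>) x = \<alpha> \<gamma> (\<alpha> \<delta> x)" using letters_S' \<alpha>_mult by blast
qed

lemma act_one: "w \<in> carrier Fr \<Longrightarrow> wact \<alpha> \<one>\<^bsub>\<Gamma>\<^esub> w = w"
proof (rule wact_id)
  fix x assume "w \<in> carrier Fr" "x \<in> fst ` set w"
  then show "\<alpha> \<one>\<^bsub>\<Gamma>\<^esub> x = x" using letters_S' \<alpha>_one by blast
qed

lemma e_Pi: "e \<in> S \<rightarrow> carrier GM" using e_closed by auto

lemma evalM_hom: "eval_word GM e \<in> hom Fr GM"
  by (rule group.eval_hom[OF GM_group e_Pi])

lemma eval_act_gen:
  assumes "group H" "f \<in> hom H H" "w \<in> carrier Fr" "\<And>x. x \<in> S \<Longrightarrow> \<phi> x \<in> carrier H"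
    "\<And>x. x \<in> S \<Longrightarrow> \<phi> (\<alpha> \<gamma> x) = f (\<phi> x)"
  shows "eval_word H \<phi> (wact \<alpha> \<gamma> w) = f (eval_word H \<phi> w)"
  by (rule eval_wact[OF assms(1,2)]) (use assms letters_S in auto)

lemma evalM_act: "\<gamma> \<in> carrier \<Gamma> \<Longrightarrow> w \<in> carrier Fr \<Longrightarrow>
   eval_word GM e (wact \<alpha> \<gamma> w) = xact M \<gamma> (eval_word GM e w)"
  by (rule eval_act_gen[OF GM_group xact_M_hom]) (auto intro: e_closed e_equiv)

lemma m_hom: "m \<in> hom Fr \<Gamma>"
proof (rule homI)
  fix x assume x: "x \<in> carrier Fr"
  show "m x \<in> carrier \<Gamma>" unfolding m_def
    by (rule hom_in_carrier[OF xmu_M_hom hom_in_carrier[OF evalM_hom x]])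
next
  fix x y assume x: "x \<in> carrier Fr" and y: "y \<in> carrier Fr"
  show "m (x \<otimes>\<^bsub>Fr\<^esub> y) = m x \<otimes>\<^bsub>\<Gamma>\<^esub> m y" unfolding m_def
    by (simp add: hom_mult[OF evalM_hom x y] hom_mult[OF xmu_M_hom]
        hom_in_carrier[OF evalM_hom x] hom_in_carrier[OF evalM_hom y])
qed

lemma m_carrier: "w \<in> carrier Fr \<Longrightarrow> m w \<in> carrier \<Gamma>"
  by (rule hom_in_carrier[OF m_hom])

lemma m_act: "\<gamma> \<in> carrier \<Gamma> \<Longrightarrow> w \<in> carrier Fr \<Longrightarrow>
   m (wact \<alpha> \<gamma> w) = \<gamma> \<otimes>\<^bsub>\<Gamma>\<^esub> m w \<otimes>\<^bsub>\<Gamma>\<^esub> inv\<^bsub>\<Gamma>\<^esub> \<gamma>"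
  unfolding m_def by (simp add: evalM_act xmu_M_act hom_in_carrier[OF evalM_hom])

lemma P_sub: "P \<subseteq> carrier Fr"
proof
  interpret F: group Fr by (rule Fr_group)
  fix p assume "p \<in> P"
  then obtain x x' where p: "p = wact \<alpha> (m x) x' \<otimes>\<^bsub>Fr\<^esub> x \<otimes>\<^bsub>Fr\<^esub> inv\<^bsub>Fr\<^esub> x' \<otimes>\<^bsub>Fr\<^esub> inv\<^bsub>Fr\<^esub> x"
    and x: "x \<in> carrier Fr" and x': "x' \<in> carrier Fr" unfolding P_def by blast
  have "wact \<alpha> (m x) x' \<in> carrier Fr" by (rule act_carrier[OF m_carrier[OF x] x'])
  then show "p \<in> carrier Fr" unfolding p using x x' by simp
qed

lemma N_normal: "N \<lhd> Fr" and P_N: "P \<subseteq> N"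
  using normal_closure_normal[OF Fr_group P_sub] by (simp_all add: N_def)

lemma N_least: "K \<lhd> Fr \<Longrightarrow> P \<subseteq> K \<Longrightarrow> N \<subseteq> K"
  unfolding N_def by (rule normal_closure_least)

lemma N_sub: "N \<subseteq> carrier Fr"
  by (rule subgroup.subset[OF normal_imp_subgroup[OF N_normal]])

lemma act_P: "\<gamma> \<in> carrier \<Gamma> \<Longrightarrow> p \<in> P \<Longrightarrow> wact \<alpha> \<gamma> p \<in> P"
proof -
  assume g: "\<gamma> \<in> carrier \<Gamma>" and "p \<in> P"
  then obtain x x' where p: "p = wact \<alpha> (m x) x' \<otimes>\<^bsub>Fr\<^esub> x \<otimes>\<^bsub>Fr\<^esub> inv\<^bsub>Fr\<^esub> x' \<otimes>\<^bsub>Fr\<^esub> inv\<^bsub>Fr\<^esub> x"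
    and x: "x \<in> carrier Fr" and x': "x' \<in> carrier Fr" unfolding P_def by blast
  interpret F: group Fr by (rule Fr_group)
  interpret G: group \<Gamma> by (rule grpG)
  have mx: "m x \<in> carrier \<Gamma>" using m_carrier x by blast
  have "wact \<alpha> \<gamma> (wact \<alpha> (m x) x') = wact \<alpha> (\<gamma> \<otimes>\<^bsub>\<Gamma>\<^esub> m x) x'"
    using act_comp g mx x' by simp
  also have "\<gamma> \<otimes>\<^bsub>\<Gamma>\<^esub> m x = m (wact \<alpha> \<gamma> x) \<otimes>\<^bsub>\<Gamma>\<^esub> \<gamma>"
    using m_act[OF g x] g mx by (simp add: G.m_assoc)
  also have "wact \<alpha> (m (wact \<alpha> \<gamma> x) \<otimes>\<^bsub>\<Gamma>\<^esub> \<gamma>) x' = wact \<alpha> (m (wact \<alpha> \<gamma> x)) (wact \<alpha> \<gamma> x')"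
    using act_comp g x' m_carrier act_carrier x by simp
  finally have 1: "wact \<alpha> \<gamma> (wact \<alpha> (m x) x') = wact \<alpha> (m (wact \<alpha> \<gamma> x)) (wact \<alpha> \<gamma> x')" .
  have "wact \<alpha> \<gamma> p = wact \<alpha> (m (wact \<alpha> \<gamma> x)) (wact \<alpha> \<gamma> x') \<otimes>\<^bsub>Fr\<^esub> wact \<alpha> \<gamma> x
      \<otimes>\<^bsub>Fr\<^esub> inv\<^bsub>Fr\<^esub> (wact \<alpha> \<gamma> x') \<otimes>\<^bsub>Fr\<^esub> inv\<^bsub>Fr\<^esub> (wact \<alpha> \<gamma> x)"
    unfolding p using g x x' mx act_carrier
    by (simp add: act_mult act_inv 1)
  thus ?thesis unfolding P_def using act_carrier g x x' by blast
qed

lemma act_N_sub: "\<gamma> \<in> carrier \<Gamma> \<Longrightarrow> wact \<alpha> \<gamma> ` N \<subseteq> N"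
proof -
  assume g: "\<gamma> \<in> carrier \<Gamma>"
  interpret F: group Fr by (rule Fr_group)
  let ?K = "{w \<in> carrier Fr. wact \<alpha> \<gamma> w \<in> N}"
  have sN: "subgroup N Fr" using N_normal normal_imp_subgroup by blast
  have "subgroup ?K Fr"
  proof (rule F.subgroupI)
    show "?K \<subseteq> carrier Fr" by blast
    show "?K \<noteq> {}" using act_hom[OF g] sN
      by (metis (mono_tags, lifting) F.one_closed F.is_group empty_iff group_hom.hom_one
          group_hom.intro group_hom_axioms.intro mem_Collect_eq subgroup.one_closed)
    fix a assume "a \<in> ?K"
    then show "inv\<^bsub>Fr\<^esub> a \<in> ?K" using act_inv[OF g] sN by (simp add: subgroup.m_inv_closed)
  next
    fix a b assume "a \<in> ?K" "b \<in> ?K"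
    then show "a \<otimes>\<^bsub>Fr\<^esub> b \<in> ?K" using act_mult[OF g] sN by (simp add: subgroup.m_closed)
  qed
  moreover have "\<And>x h. x \<in> carrier Fr \<Longrightarrow> h \<in> ?K \<Longrightarrow> x \<otimes>\<^bsub>Fr\<^esub> h \<otimes>\<^bsub>Fr\<^esub> inv\<^bsub>Fr\<^esub> x \<in> ?K"
  proof -
    fix x h assume x: "x \<in> carrier Fr" and h: "h \<in> ?K"
    have "wact \<alpha> \<gamma> (x \<otimes>\<^bsub>Fr\<^esub> h \<otimes>\<^bsub>Fr\<^esub> inv\<^bsub>Fr\<^esub> x)
        = wact \<alpha> \<gamma> x \<otimes>\<^bsub>Fr\<^esub> wact \<alpha> \<gamma> h \<otimes>\<^bsub>Fr\<^esub> inv\<^bsub>Fr\<^esub> (wact \<alpha> \<gamma> x)"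
      using x h g by (simp add: act_mult act_inv)
    also have "\<dots> \<in> N" using h x act_carrier[OF g x] N_normal by (simp add: F.normal_invE(2))
    finally show "x \<otimes>\<^bsub>Fr\<^esub> h \<otimes>\<^bsub>Fr\<^esub> inv\<^bsub>Fr\<^esub> x \<in> ?K" using x h by simp
  qed
  ultimately have "?K \<lhd> Fr" by (rule F.normal_invI)
  moreover have "P \<subseteq> ?K" using P_sub act_P[OF g] P_N by blast
  ultimately have "N \<subseteq> ?K" by (rule N_least)
  thus ?thesis by blast
qed

lemma act_N: "\<gamma> \<in> carrier \<Gamma> \<Longrightarrow> wact \<alpha> \<gamma> ` N = N"
proof
  assume g: "\<gamma> \<in> carrier \<Gamma>"
  show "wact \<alpha> \<gamma> ` N \<subseteq> N" by (rule act_N_sub[OF g])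
  have ig: "inv\<^bsub>\<Gamma>\<^esub> \<gamma> \<in> carrier \<Gamma>" using g grpG by (simp add: group.inv_closed)
  show "N \<subseteq> wact \<alpha> \<gamma> ` N"
  proof
    fix n assume n: "n \<in> N"
    have nc: "n \<in> carrier Fr" using n N_sub by blast
    have "wact \<alpha> \<gamma> (wact \<alpha> (inv\<^bsub>\<Gamma>\<^esub> \<gamma>) n) = n"
      using act_comp[OF g ig nc, symmetric] g grpG act_one[OF nc] by (simp add: group.r_inv)
    moreover have "wact \<alpha> (inv\<^bsub>\<Gamma>\<^esub> \<gamma>) n \<in> N" using act_N_sub[OF ig] n by blast
    ultimately show "n \<in> wact \<alpha> \<gamma> ` N" by (metis image_eqI)
  qed
qed

abbreviation cos :: "'x word \<Rightarrow> 'x word set" where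
  "cos w \<equiv> N #>\<^bsub>Fr\<^esub> w"

lemma Q_group: "group (Fr Mod N)"
  by (rule normal.factorgroup_is_group[OF N_normal])

lemma cos_hom: "cos \<in> hom Fr (Fr Mod N)"
  by (rule normal.r_coset_hom_Mod[OF N_normal])

lemma cos_grp_hom: "group_hom Fr (Fr Mod N) cos"
  by (intro group_hom.intro group_hom_axioms.intro Fr_group Q_group cos_hom)

lemma carrier_Q: "carrier (Fr Mod N) = cos ` carrier Fr"
  by (rule carrier_FactGroup)

lemma cos_carrier: "w \<in> carrier Fr \<Longrightarrow> cos w \<in> carrier (Fr Mod N)"
  by (simp add: carrier_Q)

lemma cos_mult: "w \<in> carrier Fr \<Longrightarrow> v \<in> carrier Fr \<Longrightarrow>
   cos w \<otimes>\<^bsub>Fr Mod N\<^esub> cos v = cos (w \<otimes>\<^bsub>Fr\<^esub> v)"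
  by (rule hom_mult[OF cos_hom, symmetric])

lemma cos_inv: "w \<in> carrier Fr \<Longrightarrow> inv\<^bsub>Fr Mod N\<^esub> (cos w) = cos (inv\<^bsub>Fr\<^esub> w)"
  by (rule group_hom.hom_inv[OF cos_grp_hom, symmetric])

lemma Q_elim: "C \<in> carrier (Fr Mod N) \<Longrightarrow> (\<And>w. w \<in> carrier Fr \<Longrightarrow> C = cos w \<Longrightarrow> thesis) \<Longrightarrow> thesis"
  using carrier_Q by blast

lemma act_cos: "\<gamma> \<in> carrier \<Gamma> \<Longrightarrow> w \<in> carrier Fr \<Longrightarrow> wact \<alpha> \<gamma> ` cos w = cos (wact \<alpha> \<gamma> w)"
proof
  assume g: "\<gamma> \<in> carrier \<Gamma>" and w: "w \<in> carrier Fr"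
  show "wact \<alpha> \<gamma> ` cos w \<subseteq> cos (wact \<alpha> \<gamma> w)"
  proof
    fix y assume "y \<in> wact \<alpha> \<gamma> ` cos w"
    then obtain h where h: "h \<in> N" and y: "y = wact \<alpha> \<gamma> (h \<otimes>\<^bsub>Fr\<^esub> w)"
      unfolding r_coset_def by blast
    have hc: "h \<in> carrier Fr" using h N_sub by blast
    have "y = wact \<alpha> \<gamma> h \<otimes>\<^bsub>Fr\<^esub> wact \<alpha> \<gamma> w" using y act_mult[OF g hc w] by simp
    moreover have "wact \<alpha> \<gamma> h \<in> N" using act_N_sub[OF g] h by blast
    ultimately show "y \<in> cos (wact \<alpha> \<gamma> w)" unfolding r_coset_def by blast
  qed
next
  assume g: "\<gamma> \<in> carrier \<Gamma>" and w: "w \<in> carrier Fr"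
  show "cos (wact \<alpha> \<gamma> w) \<subseteq> wact \<alpha> \<gamma> ` cos w"
  proof
    fix y assume "y \<in> cos (wact \<alpha> \<gamma> w)"
    then obtain h' where h': "h' \<in> N" and y: "y = h' \<otimes>\<^bsub>Fr\<^esub> wact \<alpha> \<gamma> w"
      unfolding r_coset_def by blast
    obtain h where h: "h \<in> N" and hh: "h' = wact \<alpha> \<gamma> h" using act_N[OF g] h' by blast
    have hc: "h \<in> carrier Fr" using h N_sub by blast
    have "y = wact \<alpha> \<gamma> (h \<otimes>\<^bsub>Fr\<^esub> w)" using y hh act_mult[OF g hc w] by simp
    moreover have "h \<otimes>\<^bsub>Fr\<^esub> w \<in> cos w" using h unfolding r_coset_def by blast
    ultimately show "y \<in> wact \<alpha> \<gamma> ` cos w" by blast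
  qed
qed

lemma univ:
  assumes H: "group H" and psi: "\<psi> \<in> hom Fr H" and kill: "\<And>p. p \<in> P \<Longrightarrow> \<psi> p = \<one>\<^bsub>H\<^esub>"
  shows "\<And>w. w \<in> carrier Fr \<Longrightarrow> qlift \<psi> (cos w) = \<psi> w"
    and "qlift \<psi> \<in> hom (Fr Mod N) H"
proof -
  have gh: "group_hom Fr H \<psi>" by (intro group_hom.intro group_hom_axioms.intro Fr_group H psi)
  have "N \<subseteq> kernel Fr H \<psi>"
  proof (rule N_least)
    show "kernel Fr H \<psi> \<lhd> Fr" by (rule group_hom.normal_kernel[OF gh])
    show "P \<subseteq> kernel Fr H \<psi>" using P_sub kill unfolding kernel_def by blast
  qed
  hence kN: "\<And>n. n \<in> N \<Longrightarrow> \<psi> n = \<one>\<^bsub>H\<^esub>" unfolding kernel_def by blast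
  show q: "\<And>w. w \<in> carrier Fr \<Longrightarrow> qlift \<psi> (cos w) = \<psi> w"
  proof -
    fix w assume w: "w \<in> carrier Fr"
    have "w \<in> cos w" by (rule group.rcos_self[OF Fr_group w normal_imp_subgroup[OF N_normal]])
    hence "(SOME v. v \<in> cos w) \<in> cos w" by (rule someI)
    then obtain h where h: "h \<in> N" and v: "(SOME v. v \<in> cos w) = h \<otimes>\<^bsub>Fr\<^esub> w"
      unfolding r_coset_def by blast
    have hc: "h \<in> carrier Fr" using h N_sub by blast
    have "\<psi> (h \<otimes>\<^bsub>Fr\<^esub> w) = \<psi> h \<otimes>\<^bsub>H\<^esub> \<psi> w" by (rule hom_mult[OF psi hc w])
    also have "\<dots> = \<psi> w" using kN[OF h] hom_in_carrier[OF psi w] H by (simp add: group.is_monoid monoid.l_one)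
    finally show "qlift \<psi> (cos w) = \<psi> w" unfolding qlift_def v .
  qed
  show "qlift \<psi> \<in> hom (Fr Mod N) H"
  proof (rule homI)
    fix C assume "C \<in> carrier (Fr Mod N)"
    then obtain w where w: "w \<in> carrier Fr" and C: "C = cos w" by (rule Q_elim)
    show "qlift \<psi> C \<in> carrier H" using q[OF w] hom_in_carrier[OF psi w] C by simp
  next
    fix C D assume "C \<in> carrier (Fr Mod N)" "D \<in> carrier (Fr Mod N)"
    then obtain w v where w: "w \<in> carrier Fr" and C: "C = cos w" and v: "v \<in> carrier Fr" and D: "D = cos v"
      by (metis Q_elim)
    have wv: "w \<otimes>\<^bsub>Fr\<^esub> v \<in> carrier Fr" using w v Fr_group by (simp add: group.is_monoid monoid.m_closed)
    show "qlift \<psi> (C \<otimes>\<^bsub>Fr Mod N\<^esub> D) = qlift \<psi> C \<otimes>\<^bsub>H\<^esub> qlift \<psi> D"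
      unfolding C D cos_mult[OF w v] q[OF wv] q[OF w] q[OF v] by (rule hom_mult[OF psi w v])
  qed
qed

lemma kill_P:
  assumes H: "group H" and psi: "\<psi> \<in> hom Fr H"
    and pe: "\<And>x x'. x \<in> carrier Fr \<Longrightarrow> x' \<in> carrier Fr \<Longrightarrow>
       \<psi> (wact \<alpha> (m x) x') = \<psi> x \<otimes>\<^bsub>H\<^esub> \<psi> x' \<otimes>\<^bsub>H\<^esub> inv\<^bsub>H\<^esub> \<psi> x"
    and p: "p \<in> P"
  shows "\<psi> p = \<one>\<^bsub>H\<^esub>"
proof -
  interpret F: group Fr by (rule Fr_group)
  interpret H: group H by (rule H)
  have gh: "group_hom Fr H \<psi>" by (intro group_hom.intro group_hom_axioms.intro Fr_group H psi)
  obtain x x' where pp: "p = wact \<alpha> (m x) x' \<otimes>\<^bsub>Fr\<^esub> x \<otimes>\<^bsub>Fr\<^esub> inv\<^bsub>Fr\<^esub> x' \<otimes>\<^bsub>Fr\<^esub> inv\<^bsub>Fr\<^esub> x"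
    and x: "x \<in> carrier Fr" and x': "x' \<in> carrier Fr" using p unfolding P_def by blast
  have a: "wact \<alpha> (m x) x' \<in> carrier Fr" by (rule act_carrier[OF m_carrier[OF x] x'])
  have px: "\<psi> x \<in> carrier H" by (rule hom_in_carrier[OF psi x])
  have px': "\<psi> x' \<in> carrier H" by (rule hom_in_carrier[OF psi x'])
  have "\<psi> p = \<psi> (wact \<alpha> (m x) x') \<otimes>\<^bsub>H\<^esub> \<psi> x \<otimes>\<^bsub>H\<^esub> inv\<^bsub>H\<^esub> \<psi> x' \<otimes>\<^bsub>H\<^esub> inv\<^bsub>H\<^esub> \<psi> x"
    unfolding pp using a x x' by (simp add: hom_mult[OF psi] group_hom.hom_inv[OF gh])
  also have "\<dots> = \<one>\<^bsub>H\<^esub>" unfolding pe[OF x x'] by (rule H.peiffer_alg[OF px px'])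
  finally show ?thesis .
qed

lemma m_kill: "p \<in> P \<Longrightarrow> m p = \<one>\<^bsub>\<Gamma>\<^esub>"
  by (rule kill_P[OF grpG m_hom]) (simp_all add: m_act m_carrier)

lemma xmu_Q_cos: "w \<in> carrier Fr \<Longrightarrow> xmu Q (cos w) = m w"
  unfolding xmu_Q by (rule univ(1)[OF grpG m_hom m_kill])

lemma Q_cm: "crossed_module \<Gamma> Q"
proof -
  interpret F: group Fr by (rule Fr_group)
  interpret G: group \<Gamma> by (rule grpG)
  have c1: "group (xgrp Q)" using Q_group xgrp_Q by simp
  have c2: "\<forall>\<gamma>\<in>carrier \<Gamma>. xact Q \<gamma> \<in> hom (xgrp Q) (xgrp Q)"
  proof
    fix \<gamma> assume g: "\<gamma> \<in> carrier \<Gamma>"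
    show "xact Q \<gamma> \<in> hom (xgrp Q) (xgrp Q)" unfolding xgrp_Q xact_Q
    proof (rule homI)
      fix C assume "C \<in> carrier (Fr Mod N)"
      then obtain w where w: "w \<in> carrier Fr" and C: "C = cos w" by (rule Q_elim)
      show "wact \<alpha> \<gamma> ` C \<in> carrier (Fr Mod N)"
        unfolding C act_cos[OF g w] by (rule cos_carrier[OF act_carrier[OF g w]])
    next
      fix C D assume "C \<in> carrier (Fr Mod N)" "D \<in> carrier (Fr Mod N)"
      then obtain w v where w: "w \<in> carrier Fr" and C: "C = cos w" and v: "v \<in> carrier Fr" and D: "D = cos v"
        by (metis Q_elim)
      show "wact \<alpha> \<gamma> ` (C \<otimes>\<^bsub>Fr Mod N\<^esub> D) = wact \<alpha> \<gamma> ` C \<otimes>\<^bsub>Fr Mod N\<^esub> wact \<alpha> \<gamma> ` D"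
        unfolding C D cos_mult[OF w v] act_cos[OF g F.m_closed[OF w v]] act_cos[OF g w] act_cos[OF g v]
          cos_mult[OF act_carrier[OF g w] act_carrier[OF g v]] act_mult[OF g w v] ..
    qed
  qed
  have c3: "\<forall>x\<in>carrier (xgrp Q). xact Q \<one>\<^bsub>\<Gamma>\<^esub> x = x"
  proof
    fix C assume "C \<in> carrier (xgrp Q)"
    then obtain w where w: "w \<in> carrier Fr" and C: "C = cos w" unfolding xgrp_Q by (rule Q_elim)
    show "xact Q \<one>\<^bsub>\<Gamma>\<^esub> C = C" unfolding xact_Q C act_cos[OF G.one_closed w] act_one[OF w] ..
  qed
  have c4: "\<forall>\<gamma>\<in>carrier \<Gamma>. \<forall>\<delta>\<in>carrier \<Gamma>. \<forall>x\<in>carrier (xgrp Q).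
        xact Q (\<gamma> \<otimes>\<^bsub>\<Gamma>\<^esub> \<delta>) x = xact Q \<gamma> (xact Q \<delta> x)"
  proof (intro ballI)
    fix \<gamma> \<delta> C assume g: "\<gamma> \<in> carrier \<Gamma>" and d: "\<delta> \<in> carrier \<Gamma>" and "C \<in> carrier (xgrp Q)"
    then obtain w where w: "w \<in> carrier Fr" and C: "C = cos w" unfolding xgrp_Q by (metis Q_elim)
    show "xact Q (\<gamma> \<otimes>\<^bsub>\<Gamma>\<^esub> \<delta>) C = xact Q \<gamma> (xact Q \<delta> C)"
      unfolding xact_Q C act_cos[OF G.m_closed[OF g d] w] act_cos[OF d w]
        act_cos[OF g act_carrier[OF d w]] act_comp[OF g d w] ..
  qed
  have c5: "xmu Q \<in> hom (xgrp Q) \<Gamma>"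
    unfolding xmu_Q xgrp_Q by (rule univ(2)[OF grpG m_hom m_kill])
  have c6: "\<forall>\<gamma>\<in>carrier \<Gamma>. \<forall>x\<in>carrier (xgrp Q).
        xmu Q (xact Q \<gamma> x) = \<gamma> \<otimes>\<^bsub>\<Gamma>\<^esub> xmu Q x \<otimes>\<^bsub>\<Gamma>\<^esub> inv\<^bsub>\<Gamma>\<^esub> \<gamma>"
  proof (intro ballI)
    fix \<gamma> C assume g: "\<gamma> \<in> carrier \<Gamma>" and "C \<in> carrier (xgrp Q)"
    then obtain w where w: "w \<in> carrier Fr" and C: "C = cos w" unfolding xgrp_Q by (metis Q_elim)
    have "xact Q \<gamma> C = cos (wact \<alpha> \<gamma> w)" unfolding xact_Q C act_cos[OF g w] ..
    then show "xmu Q (xact Q \<gamma> C) = \<gamma> \<otimes>\<^bsub>\<Gamma>\<^esub> xmu Q C \<otimes>\<^bsub>\<Gamma>\<^esub> inv\<^bsub>\<Gamma>\<^esub> \<gamma>"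
      unfolding C xmu_Q_cos[OF w] using xmu_Q_cos[OF act_carrier[OF g w]] m_act[OF g w] by simp
  qed
  have c7: "\<forall>x\<in>carrier (xgrp Q). \<forall>y\<in>carrier (xgrp Q).
        xact Q (xmu Q x) y = x \<otimes>\<^bsub>xgrp Q\<^esub> y \<otimes>\<^bsub>xgrp Q\<^esub> inv\<^bsub>xgrp Q\<^esub> x"
  proof (intro ballI)
    fix C D assume "C \<in> carrier (xgrp Q)" "D \<in> carrier (xgrp Q)"
    then obtain w v where w: "w \<in> carrier Fr" and C: "C = cos w" and v: "v \<in> carrier Fr" and D: "D = cos v"
      unfolding xgrp_Q by (metis Q_elim)
    have mw: "m w \<in> carrier \<Gamma>" by (rule m_carrier[OF w])
    let ?a = "wact \<alpha> (m w) v" and ?b = "w \<otimes>\<^bsub>Fr\<^esub> v \<otimes>\<^bsub>Fr\<^esub> inv\<^bsub>Fr\<^esub> w"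
    have a: "?a \<in> carrier Fr" by (rule act_carrier[OF mw v])
    have b: "?b \<in> carrier Fr" using w v by simp
    have lhs: "xact Q (xmu Q C) D = cos ?a" unfolding xact_Q xmu_Q_cos[OF w] C D act_cos[OF mw v] ..
    have rhs: "C \<otimes>\<^bsub>xgrp Q\<^esub> D \<otimes>\<^bsub>xgrp Q\<^esub> inv\<^bsub>xgrp Q\<^esub> C = cos ?b"
      unfolding xgrp_Q C D cos_inv[OF w] cos_mult[OF w v]
      using cos_mult[OF F.m_closed[OF w v] F.inv_closed[OF w]] by simp
    let ?p = "?a \<otimes>\<^bsub>Fr\<^esub> w \<otimes>\<^bsub>Fr\<^esub> inv\<^bsub>Fr\<^esub> v \<otimes>\<^bsub>Fr\<^esub> inv\<^bsub>Fr\<^esub> w"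
    have "?p \<in> P" unfolding P_def using w v by blast
    hence pN: "?p \<in> N" using P_N by blast
    have "?p \<otimes>\<^bsub>Fr\<^esub> ?b = ?a" by (rule F.peiffer_alg2[OF a w v])
    hence "?a \<in> cos ?b" using pN unfolding r_coset_def by blast
    hence "cos ?b = cos ?a"
      by (rule F.repr_independence[OF _ b normal_imp_subgroup[OF N_normal]])
    then show "xact Q (xmu Q C) D = C \<otimes>\<^bsub>xgrp Q\<^esub> D \<otimes>\<^bsub>xgrp Q\<^esub> inv\<^bsub>xgrp Q\<^esub> C"
      using lhs rhs by simp
  qed
  show ?thesis unfolding crossed_module_def using c1 c2 c3 c4 c5 c6 c7 by blast
qed

abbreviation gen :: "'x \<Rightarrow> 'x word set" where
  "gen x \<equiv> cos [(x, False)]"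

lemma single_carrier: "x \<in> S \<Longrightarrow> [(x, b)] \<in> carrier Fr"
  by (simp add: carrier_free_grp)

lemma gen_carrier: "x \<in> S \<Longrightarrow> gen x \<in> carrier (xgrp Q)"
  unfolding xgrp_Q by (rule cos_carrier[OF single_carrier])

lemma act_gen: "\<gamma> \<in> carrier \<Gamma> \<Longrightarrow> x \<in> S \<Longrightarrow> xact Q \<gamma> (gen x) = gen (\<alpha> \<gamma> x)"
  unfolding xact_Q using act_cos[OF _ single_carrier] by simp

lemma xmu_gen: "x \<in> S \<Longrightarrow> xmu Q (gen x) = xmu M (e x)"
proof -
  assume x: "x \<in> S"
  show ?thesis using xmu_Q_cos[OF single_carrier[OF x]] eval_single[of GM e x, OF GM_group e_closed[OF x]] by (simp add: m_def)
qed

lemma hom_gen: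
  assumes H: "group H" and h: "h \<in> hom (xgrp Q) H"
  shows "w \<in> carrier Fr \<Longrightarrow> h (cos w) = eval_word H (\<lambda>x. h (gen x)) w"
proof (induction w)
  case Nil
  have "cos \<one>\<^bsub>Fr\<^esub> = \<one>\<^bsub>Fr Mod N\<^esub>" by (rule group_hom.hom_one[OF cos_grp_hom])
  hence "cos [] = \<one>\<^bsub>xgrp Q\<^esub>" unfolding xgrp_Q one_free_grp .
  moreover have gh: "group_hom (xgrp Q) H h"
    by (intro group_hom.intro group_hom_axioms.intro H h) (simp add: xgrp_Q Q_group)
  ultimately show ?case using group_hom.hom_one[OF gh] by simp
next
  case (Cons a w)
  interpret F: group Fr by (rule Fr_group)
  have gh: "group_hom (xgrp Q) H h"
    by (intro group_hom.intro group_hom_axioms.intro H h) (simp add: xgrp_Q Q_group)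
  have aS: "fst a \<in> S" using Cons.prems by (simp add: carrier_free_grp)
  have w: "w \<in> carrier Fr" using Cons.prems redP_appendD[of "[a]" w] by (simp add: carrier_free_grp)
  have ac: "[a] \<in> carrier Fr" using aS by (simp add: carrier_free_grp)
  have "[a] \<otimes>\<^bsub>Fr\<^esub> w = a # w"
    using Cons.prems reduce_redP[of "a # w"] by (simp add: mult_free_grp carrier_free_grp)
  hence "cos (a # w) = cos [a] \<otimes>\<^bsub>xgrp Q\<^esub> cos w" unfolding xgrp_Q using cos_mult[OF ac w] by simp
  hence 1: "h (cos (a # w)) = h (cos [a]) \<otimes>\<^bsub>H\<^esub> h (cos w)"
    using hom_mult[OF h] cos_carrier[OF ac] cos_carrier[OF w] by (simp add: xgrp_Q)
  have 2: "h (cos [a]) = lett H (\<lambda>x. h (gen x)) a"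
  proof (cases "snd a")
    case True
    have "[a] = winv [(fst a, False)]" using True by (simp add: winv_def flip_def prod_eq_iff)
    hence "[a] = inv\<^bsub>Fr\<^esub> [(fst a, False)]" using inv_free_grp[OF single_carrier[OF aS]] by simp
    hence "cos [a] = inv\<^bsub>xgrp Q\<^esub> gen (fst a)" using cos_inv[OF single_carrier[OF aS]] by (simp add: xgrp_Q)
    hence "h (cos [a]) = inv\<^bsub>H\<^esub> h (gen (fst a))"
      using group_hom.hom_inv[OF gh gen_carrier[OF aS]] by simp
    then show ?thesis using True by (simp add: lett_def)
  next
    case False
    hence "[a] = [(fst a, False)]" by (simp add: prod_eq_iff)
    then show ?thesis using False by (simp add: lett_def)
  qed
  show ?case using 1 2 Cons.IH[OF w] by simp
qed

lemma lift_hom: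
  assumes cmY: "crossed_module \<Gamma> Y"
    and phi: "\<And>x. x \<in> S \<Longrightarrow> \<phi> x \<in> carrier (xgrp Y)"
    and phieq: "\<And>\<gamma> x. \<gamma> \<in> carrier \<Gamma> \<Longrightarrow> x \<in> S \<Longrightarrow> \<phi> (\<alpha> \<gamma> x) = xact Y \<gamma> (\<phi> x)"
    and phimu: "\<And>x. x \<in> S \<Longrightarrow> xmu Y (\<phi> x) = xmu M (e x)"
  shows "xmod_hom \<Gamma> Q Y (qlift (eval_word (xgrp Y) \<phi>))"
    and "\<And>w. w \<in> carrier Fr \<Longrightarrow> qlift (eval_word (xgrp Y) \<phi>) (cos w) = eval_word (xgrp Y) \<phi> w"
proof -
  let ?Y = "xgrp Y" and ?\<psi> = "eval_word (xgrp Y) \<phi>"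
  have GY: "group ?Y" using cmY by (simp add: crossed_module_def)
  have actY: "\<And>\<gamma>. \<gamma> \<in> carrier \<Gamma> \<Longrightarrow> xact Y \<gamma> \<in> hom ?Y ?Y" using cmY by (simp add: crossed_module_def)
  have muY: "xmu Y \<in> hom ?Y \<Gamma>" using cmY by (simp add: crossed_module_def)
  have peY: "\<And>x y. x \<in> carrier ?Y \<Longrightarrow> y \<in> carrier ?Y \<Longrightarrow>
        xact Y (xmu Y x) y = x \<otimes>\<^bsub>?Y\<^esub> y \<otimes>\<^bsub>?Y\<^esub> inv\<^bsub>?Y\<^esub> x" using cmY by (simp add: crossed_module_def)
  have psi: "?\<psi> \<in> hom Fr ?Y" by (rule group.eval_hom[OF GY]) (use phi in auto)
  have cl: "\<And>w. w \<in> carrier Fr \<Longrightarrow> \<forall>a\<in>set w. \<phi> (fst a) \<in> carrier ?Y"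
    using phi letters_S by blast
  have cle: "\<And>w. w \<in> carrier Fr \<Longrightarrow> \<forall>a\<in>set w. e (fst a) \<in> carrier GM"
    using e_closed letters_S by blast
  have mu: "\<And>w. w \<in> carrier Fr \<Longrightarrow> xmu Y (?\<psi> w) = m w"
  proof -
    fix w assume w: "w \<in> carrier Fr"
    have "xmu Y (?\<psi> w) = eval_word \<Gamma> (xmu Y \<circ> \<phi>) w"
      by (rule eval_hom_comm[OF GY grpG muY cl[OF w]])
    also have "\<dots> = eval_word \<Gamma> (xmu M \<circ> e) w"
      by (rule eval_cong) (use w letters_S phimu in auto)
    also have "\<dots> = m w" unfolding m_def
      by (rule eval_hom_comm[OF GM_group grpG xmu_M_hom cle[OF w], symmetric])
    finally show "xmu Y (?\<psi> w) = m w" .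
  qed
  have act: "\<And>\<gamma> w. \<gamma> \<in> carrier \<Gamma> \<Longrightarrow> w \<in> carrier Fr \<Longrightarrow> ?\<psi> (wact \<alpha> \<gamma> w) = xact Y \<gamma> (?\<psi> w)"
    by (rule eval_act_gen[OF GY actY]) (auto intro: phi phieq)
  have kill: "\<And>p. p \<in> P \<Longrightarrow> ?\<psi> p = \<one>\<^bsub>?Y\<^esub>"
  proof (rule kill_P[OF GY psi])
    fix x x' assume x: "x \<in> carrier Fr" and x': "x' \<in> carrier Fr"
    have "?\<psi> (wact \<alpha> (m x) x') = xact Y (m x) (?\<psi> x')" by (rule act[OF m_carrier[OF x] x'])
    also have "\<dots> = xact Y (xmu Y (?\<psi> x)) (?\<psi> x')" using mu[OF x] by simp
    also have "\<dots> = ?\<psi> x \<otimes>\<^bsub>?Y\<^esub> ?\<psi> x' \<otimes>\<^bsub>?Y\<^esub> inv\<^bsub>?Y\<^esub> ?\<psi> x"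
      by (rule peY[OF hom_in_carrier[OF psi x] hom_in_carrier[OF psi x']])
    finally show "?\<psi> (wact \<alpha> (m x) x') = ?\<psi> x \<otimes>\<^bsub>?Y\<^esub> ?\<psi> x' \<otimes>\<^bsub>?Y\<^esub> inv\<^bsub>?Y\<^esub> ?\<psi> x" .
  qed
  note U = univ[OF GY psi kill]
  show q: "\<And>w. w \<in> carrier Fr \<Longrightarrow> qlift ?\<psi> (cos w) = ?\<psi> w" by (rule U(1))
  show "xmod_hom \<Gamma> Q Y (qlift ?\<psi>)" unfolding xmod_hom_def
  proof (intro conjI ballI)
    show "qlift ?\<psi> \<in> hom (xgrp Q) ?Y" unfolding xgrp_Q by (rule U(2))
  next
    fix \<gamma> C assume g: "\<gamma> \<in> carrier \<Gamma>" and "C \<in> carrier (xgrp Q)"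
    then obtain w where w: "w \<in> carrier Fr" and C: "C = cos w" unfolding xgrp_Q by (metis Q_elim)
    have "xact Q \<gamma> C = cos (wact \<alpha> \<gamma> w)" unfolding xact_Q C act_cos[OF g w] ..
    then show "qlift ?\<psi> (xact Q \<gamma> C) = xact Y \<gamma> (qlift ?\<psi> C)"
      using q[OF act_carrier[OF g w]] q[OF w] act[OF g w] C by simp
  next
    fix C assume "C \<in> carrier (xgrp Q)"
    then obtain w where w: "w \<in> carrier Fr" and C: "C = cos w" unfolding xgrp_Q by (metis Q_elim)
    show "xmu Y (qlift ?\<psi> C) = xmu Q C" unfolding C q[OF w] xmu_Q_cos[OF w] by (rule mu[OF w])
  qed
qed

lemma lift_general:
  assumes cmY': "crossed_module \<Gamma> Y'" and cmY: "crossed_module \<Gamma> Y"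
    and f: "xmod_hom \<Gamma> Y' Y f" and h: "xmod_hom \<Gamma> Q Y h"
    and phi: "\<And>x. x \<in> S \<Longrightarrow> \<phi> x \<in> carrier (xgrp Y')"
    and phieq: "\<And>\<gamma> x. \<gamma> \<in> carrier \<Gamma> \<Longrightarrow> x \<in> S \<Longrightarrow> \<phi> (\<alpha> \<gamma> x) = xact Y' \<gamma> (\<phi> x)"
    and fphi: "\<And>x. x \<in> S \<Longrightarrow> f (\<phi> x) = h (gen x)"
  shows "\<exists>h'. xmod_hom \<Gamma> Q Y' h' \<and> (\<forall>x\<in>carrier (xgrp Q). f (h' x) = h x)"
proof -
  have fh: "f \<in> hom (xgrp Y') (xgrp Y)" and fmu: "\<And>y. y \<in> carrier (xgrp Y') \<Longrightarrow> xmu Y (f y) = xmu Y' y"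
    using f unfolding xmod_hom_def by auto
  have hh: "h \<in> hom (xgrp Q) (xgrp Y)" and hmu: "\<And>C. C \<in> carrier (xgrp Q) \<Longrightarrow> xmu Y (h C) = xmu Q C"
    using h unfolding xmod_hom_def by auto
  have GY': "group (xgrp Y')" using cmY' by (simp add: crossed_module_def)
  have GY: "group (xgrp Y)" using cmY by (simp add: crossed_module_def)
  have phimu: "\<And>x. x \<in> S \<Longrightarrow> xmu Y' (\<phi> x) = xmu M (e x)"
  proof -
    fix x assume x: "x \<in> S"
    have "xmu Y' (\<phi> x) = xmu Y (f (\<phi> x))" using fmu[OF phi[OF x]] by simp
    also have "\<dots> = xmu Q (gen x)" using fphi[OF x] hmu[OF gen_carrier[OF x]] by simp
    also have "\<dots> = xmu M (e x)" by (rule xmu_gen[OF x])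
    finally show "xmu Y' (\<phi> x) = xmu M (e x)" .
  qed
  have L1: "xmod_hom \<Gamma> Q Y' (qlift (eval_word (xgrp Y') \<phi>))"
    using phi phieq phimu by (rule lift_hom(1)[OF cmY'])
  have L2: "\<And>w. w \<in> carrier Fr \<Longrightarrow> qlift (eval_word (xgrp Y') \<phi>) (cos w) = eval_word (xgrp Y') \<phi> w"
    using phi phieq phimu by (rule lift_hom(2)[OF cmY'])
  show ?thesis
  proof (intro exI conjI ballI)
    show "xmod_hom \<Gamma> Q Y' (qlift (eval_word (xgrp Y') \<phi>))" by (rule L1)
    fix C assume "C \<in> carrier (xgrp Q)"
    then obtain w where w: "w \<in> carrier Fr" and C: "C = cos w" unfolding xgrp_Q by (metis Q_elim)
    have cl: "\<forall>a\<in>set w. \<phi> (fst a) \<in> carrier (xgrp Y')" using phi letters_S w by blast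
    have "f (qlift (eval_word (xgrp Y') \<phi>) C) = f (eval_word (xgrp Y') \<phi> w)" unfolding C L2[OF w] ..
    also have "\<dots> = eval_word (xgrp Y) (f \<circ> \<phi>) w" by (rule eval_hom_comm[OF GY' GY fh cl])
    also have "\<dots> = eval_word (xgrp Y) (\<lambda>x. h (gen x)) w"
      by (rule eval_cong) (use w letters_S fphi in auto)
    also have "\<dots> = h C" unfolding C by (rule hom_gen[OF GY hh w, symmetric])
    finally show "f (qlift (eval_word (xgrp Y') \<phi>) C) = h C" .
  qed
qed

lemma canon:
  shows "xmod_hom \<Gamma> Q M (qlift (eval_word GM e))"
    and "\<And>x. x \<in> S \<Longrightarrow> qlift (eval_word GM e) (gen x) = e x"
proof -
  show "xmod_hom \<Gamma> Q M (qlift (eval_word GM e))"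
    using e_closed e_equiv refl by (rule lift_hom(1)[OF cmM])
  have L2: "\<And>w. w \<in> carrier Fr \<Longrightarrow> qlift (eval_word GM e) (cos w) = eval_word GM e w"
    using e_closed e_equiv refl by (rule lift_hom(2)[OF cmM])
  fix x assume x: "x \<in> S"
  show "qlift (eval_word GM e) (gen x) = e x"
    using L2[OF single_carrier[OF x]] eval_single[of GM e x, OF GM_group e_closed[OF x]] by simp
qed


end

lemma pq_free:
  assumes G: "group \<Gamma>" and L: "crossed_module \<Gamma> L"
  shows "pq \<Gamma> L (carrier \<Gamma> \<times> carrier (xgrp L)) (\<lambda>\<gamma>' (\<gamma>, g). (\<gamma>' \<otimes>\<^bsub>\<Gamma>\<^esub> \<gamma>, g)) (\<lambda>(\<gamma>, g). xact L \<gamma> g)"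
proof -
  interpret G: group \<Gamma> by (rule G)
  have actL: "\<And>\<gamma> x. \<gamma> \<in> carrier \<Gamma> \<Longrightarrow> x \<in> carrier (xgrp L) \<Longrightarrow> xact L \<gamma> x \<in> carrier (xgrp L)"
  proof -
    fix \<gamma> x assume g: "\<gamma> \<in> carrier \<Gamma>" and x: "x \<in> carrier (xgrp L)"
    have "xact L \<gamma> \<in> hom (xgrp L) (xgrp L)" using L g by (simp add: crossed_module_def)
    then show "xact L \<gamma> x \<in> carrier (xgrp L)" using x by (rule hom_in_carrier)
  qed
  have compL: "\<And>\<gamma> \<delta> x. \<gamma> \<in> carrier \<Gamma> \<Longrightarrow> \<delta> \<in> carrier \<Gamma> \<Longrightarrow> x \<in> carrier (xgrp L) \<Longrightarrow>
        xact L (\<gamma> \<otimes>\<^bsub>\<Gamma>\<^esub> \<delta>) x = xact L \<gamma> (xact L \<delta> x)"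
    using L by (simp add: crossed_module_def)
  show ?thesis
    unfolding pq_def
  proof (intro conjI allI impI)
    show "group \<Gamma>" by (rule G)
    show "crossed_module \<Gamma> L" by (rule L)
  qed (auto simp: G.m_assoc actL compL split: prod.splits)
qed

lemma pq_eqf:
  assumes G: "group \<Gamma>" and L: "crossed_module \<Gamma> L"
  shows "pq \<Gamma> L (carrier (xgrp L)) (xact L) (\<lambda>g. g)"
proof -
  have actL: "\<And>\<gamma> x. \<gamma> \<in> carrier \<Gamma> \<Longrightarrow> x \<in> carrier (xgrp L) \<Longrightarrow> xact L \<gamma> x \<in> carrier (xgrp L)"
  proof -
    fix \<gamma> x assume g: "\<gamma> \<in> carrier \<Gamma>" and x: "x \<in> carrier (xgrp L)"
    have "xact L \<gamma> \<in> hom (xgrp L) (xgrp L)" using L g by (simp add: crossed_module_def)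
    then show "xact L \<gamma> x \<in> carrier (xgrp L)" using x by (rule hom_in_carrier)
  qed
  have compL: "\<And>\<gamma> \<delta> x. \<gamma> \<in> carrier \<Gamma> \<Longrightarrow> \<delta> \<in> carrier \<Gamma> \<Longrightarrow> x \<in> carrier (xgrp L) \<Longrightarrow>
        xact L (\<gamma> \<otimes>\<^bsub>\<Gamma>\<^esub> \<delta>) x = xact L \<gamma> (xact L \<delta> x)"
    using L by (simp add: crossed_module_def)
  have oneL: "\<And>x. x \<in> carrier (xgrp L) \<Longrightarrow> xact L \<one>\<^bsub>\<Gamma>\<^esub> x = x"
    using L by (simp add: crossed_module_def)
  show ?thesis
    unfolding pq_def
  proof (intro conjI allI impI)
    show "group \<Gamma>" by (rule G)
    show "crossed_module \<Gamma> L" by (rule L)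
  qed (auto simp: actL compL oneL)
qed


lemma xmod_hom_comp:
  assumes f: "xmod_hom \<Gamma> A B f" and g: "xmod_hom \<Gamma> B C g"
  shows "xmod_hom \<Gamma> A C (g \<circ> f)"
proof -
  have fh: "f \<in> hom (xgrp A) (xgrp B)" and fe: "\<And>\<gamma> x. \<gamma> \<in> carrier \<Gamma> \<Longrightarrow> x \<in> carrier (xgrp A) \<Longrightarrow> f (xact A \<gamma> x) = xact B \<gamma> (f x)"
    and fm: "\<And>x. x \<in> carrier (xgrp A) \<Longrightarrow> xmu B (f x) = xmu A x"
    using f unfolding xmod_hom_def by auto
  have gh: "g \<in> hom (xgrp B) (xgrp C)" and ge: "\<And>\<gamma> x. \<gamma> \<in> carrier \<Gamma> \<Longrightarrow> x \<in> carrier (xgrp B) \<Longrightarrow> g (xact B \<gamma> x) = xact C \<gamma> (g x)"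
    and gm: "\<And>x. x \<in> carrier (xgrp B) \<Longrightarrow> xmu C (g x) = xmu B x"
    using g unfolding xmod_hom_def by auto
  have h: "g \<circ> f \<in> hom (xgrp A) (xgrp C)"
  proof (rule homI)
    fix x assume x: "x \<in> carrier (xgrp A)"
    show "(g \<circ> f) x \<in> carrier (xgrp C)" unfolding comp_def
      by (rule hom_in_carrier[OF gh hom_in_carrier[OF fh x]])
  next
    fix x y assume x: "x \<in> carrier (xgrp A)" and y: "y \<in> carrier (xgrp A)"
    show "(g \<circ> f) (x \<otimes>\<^bsub>xgrp A\<^esub> y) = (g \<circ> f) x \<otimes>\<^bsub>xgrp C\<^esub> (g \<circ> f) y"
      unfolding comp_def hom_mult[OF fh x y]
      by (rule hom_mult[OF gh hom_in_carrier[OF fh x] hom_in_carrier[OF fh y]])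
  qed
  show ?thesis unfolding xmod_hom_def
  proof (intro conjI ballI)
    show "g \<circ> f \<in> hom (xgrp A) (xgrp C)" by (rule h)
  next
    fix \<gamma> x assume g: "\<gamma> \<in> carrier \<Gamma>" and x: "x \<in> carrier (xgrp A)"
    show "(g \<circ> f) (xact A \<gamma> x) = xact C \<gamma> ((g \<circ> f) x)"
      unfolding comp_def fe[OF g x] by (rule ge[OF g hom_in_carrier[OF fh x]])
  next
    fix x assume x: "x \<in> carrier (xgrp A)"
    show "xmu C ((g \<circ> f) x) = xmu A x"
      unfolding comp_def gm[OF hom_in_carrier[OF fh x]] by (rule fm[OF x])
  qed
qed

lemma xmod_hom_id: "xmod_hom \<Gamma> A A id"
  unfolding xmod_hom_def by (auto intro: homI)

lemma xmod_hom_carrier: "xmod_hom \<Gamma> A B f \<Longrightarrow> x \<in> carrier (xgrp A) \<Longrightarrow> f x \<in> carrier (xgrp B)"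
proof -
  assume "xmod_hom \<Gamma> A B f" "x \<in> carrier (xgrp A)"
  then show ?thesis unfolding xmod_hom_def by (metis hom_in_carrier)
qed

lemma lift_free:
  assumes G: "group \<Gamma>" and M': "crossed_module \<Gamma> M'" and M: "crossed_module \<Gamma> M"
    and L: "crossed_module \<Gamma> L" and f: "xmod_surj \<Gamma> M' M f"
  shows "xmod_lifts \<Gamma> (free_xmod \<Gamma> L) M' M f"
proof -
  interpret G: group \<Gamma> by (rule G)
  let ?S = "carrier \<Gamma> \<times> carrier (xgrp L)" and ?\<alpha> = "\<lambda>\<gamma>' (\<gamma>, g). (\<gamma>' \<otimes>\<^bsub>\<Gamma>\<^esub> \<gamma>, g)"
    and ?e = "\<lambda>(\<gamma>, g). xact L \<gamma> g"
  interpret P: pq \<Gamma> L ?S ?\<alpha> ?e by (rule pq_free[OF G L])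
  have Qd: "free_xmod \<Gamma> L = P.Q" by (simp add: free_xmod_def)
  have fh: "xmod_hom \<Gamma> M' M f" and fs: "f ` carrier (xgrp M') = carrier (xgrp M)"
    using f unfolding xmod_surj_def by auto
  have fe: "\<And>\<gamma> x. \<gamma> \<in> carrier \<Gamma> \<Longrightarrow> x \<in> carrier (xgrp M') \<Longrightarrow> f (xact M' \<gamma> x) = xact M \<gamma> (f x)"
    using fh unfolding xmod_hom_def by auto
  have actM': "\<And>\<gamma> x. \<gamma> \<in> carrier \<Gamma> \<Longrightarrow> x \<in> carrier (xgrp M') \<Longrightarrow> xact M' \<gamma> x \<in> carrier (xgrp M')"
  proof -
    fix \<gamma> x assume g: "\<gamma> \<in> carrier \<Gamma>" and x: "x \<in> carrier (xgrp M')"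
    have "xact M' \<gamma> \<in> hom (xgrp M') (xgrp M')" using M' g by (simp add: crossed_module_def)
    then show "xact M' \<gamma> x \<in> carrier (xgrp M')" using x by (rule hom_in_carrier)
  qed
  have compM': "\<And>\<gamma> \<delta> x. \<gamma> \<in> carrier \<Gamma> \<Longrightarrow> \<delta> \<in> carrier \<Gamma> \<Longrightarrow> x \<in> carrier (xgrp M') \<Longrightarrow>
        xact M' (\<gamma> \<otimes>\<^bsub>\<Gamma>\<^esub> \<delta>) x = xact M' \<gamma> (xact M' \<delta> x)"
    using M' by (simp add: crossed_module_def)
  show ?thesis unfolding xmod_lifts_def Qd
  proof (intro allI impI)
    fix h assume h: "xmod_hom \<Gamma> P.Q M h"
    have he: "\<And>\<gamma> x. \<gamma> \<in> carrier \<Gamma> \<Longrightarrow> x \<in> carrier (xgrp P.Q) \<Longrightarrow> h (xact P.Q \<gamma> x) = xact M \<gamma> (h x)"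
      using h unfolding xmod_hom_def by auto
    define s where "s g = (SOME y. y \<in> carrier (xgrp M') \<and> f y = h (P.gen (\<one>\<^bsub>\<Gamma>\<^esub>, g)))" for g
    have s: "\<And>g. g \<in> carrier (xgrp L) \<Longrightarrow> s g \<in> carrier (xgrp M') \<and> f (s g) = h (P.gen (\<one>\<^bsub>\<Gamma>\<^esub>, g))"
    proof -
      fix g assume g: "g \<in> carrier (xgrp L)"
      have "h (P.gen (\<one>\<^bsub>\<Gamma>\<^esub>, g)) \<in> carrier (xgrp M)"
        by (rule xmod_hom_carrier[OF h P.gen_carrier]) (simp add: g)
      then obtain y where "y \<in> carrier (xgrp M')" "f y = h (P.gen (\<one>\<^bsub>\<Gamma>\<^esub>, g))"
        unfolding fs[symmetric] by (rule imageE) simp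
      then show "s g \<in> carrier (xgrp M') \<and> f (s g) = h (P.gen (\<one>\<^bsub>\<Gamma>\<^esub>, g))"
        unfolding s_def by (rule someI[where P="\<lambda>y. y \<in> carrier (xgrp M') \<and> f y = h (P.gen (\<one>\<^bsub>\<Gamma>\<^esub>, g))", OF conjI])
    qed
    define \<phi> where "\<phi> = (\<lambda>(\<gamma>, g). xact M' \<gamma> (s g))"
    show "\<exists>h'. xmod_hom \<Gamma> P.Q M' h' \<and> (\<forall>x\<in>carrier (xgrp P.Q). f (h' x) = h x)"
    proof (rule P.lift_general[OF M' M fh h])
      fix x assume "x \<in> ?S"
      then obtain \<gamma> g where x: "x = (\<gamma>, g)" and g0: "\<gamma> \<in> carrier \<Gamma>" and g: "g \<in> carrier (xgrp L)" by (cases x) simp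
      show "\<phi> x \<in> carrier (xgrp M')" unfolding x \<phi>_def using actM'[OF g0] s[OF g] by simp
    next
      fix \<gamma>' x assume g': "\<gamma>' \<in> carrier \<Gamma>" and "x \<in> ?S"
      then obtain \<gamma> g where x: "x = (\<gamma>, g)" and g0: "\<gamma> \<in> carrier \<Gamma>" and g: "g \<in> carrier (xgrp L)" by (cases x) simp
      show "\<phi> (?\<alpha> \<gamma>' x) = xact M' \<gamma>' (\<phi> x)" unfolding x \<phi>_def using compM'[OF g' g0] s[OF g] by simp
    next
      fix x assume "x \<in> ?S"
      then obtain \<gamma> g where x: "x = (\<gamma>, g)" and g0: "\<gamma> \<in> carrier \<Gamma>" and g: "g \<in> carrier (xgrp L)" by (cases x) simp
      have sg: "s g \<in> carrier (xgrp M')" and fsg: "f (s g) = h (P.gen (\<one>\<^bsub>\<Gamma>\<^esub>, g))" using s[OF g] by auto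
      have S1: "(\<one>\<^bsub>\<Gamma>\<^esub>, g) \<in> ?S" using g by simp
      have "f (\<phi> x) = xact M \<gamma> (f (s g))" unfolding x \<phi>_def using fe[OF g0 sg] by simp
      also have "\<dots> = xact M \<gamma> (h (P.gen (\<one>\<^bsub>\<Gamma>\<^esub>, g)))" using fsg by simp
      also have "\<dots> = h (xact P.Q \<gamma> (P.gen (\<one>\<^bsub>\<Gamma>\<^esub>, g)))" using he[OF g0 P.gen_carrier[OF S1]] by simp
      also have "\<dots> = h (P.gen (\<gamma> \<otimes>\<^bsub>\<Gamma>\<^esub> \<one>\<^bsub>\<Gamma>\<^esub>, g))" using P.act_gen[OF g0 S1] by simp
      also have "\<dots> = h (P.gen x)" using g0 x by simp
      finally show "f (\<phi> x) = h (P.gen x)" .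
    qed
  qed
qed

lemma lift_eqfree:
  assumes G: "group \<Gamma>" and M': "crossed_module \<Gamma> M'" and M: "crossed_module \<Gamma> M"
    and L: "crossed_module \<Gamma> L" and f: "xmod_eq_split \<Gamma> M' M f"
  shows "xmod_lifts \<Gamma> (eq_free_xmod \<Gamma> L) M' M f"
proof -
  interpret P: pq \<Gamma> L "carrier (xgrp L)" "xact L" "\<lambda>g. g" by (rule pq_eqf[OF G L])
  have Qd: "eq_free_xmod \<Gamma> L = P.Q" by (simp add: eq_free_xmod_def)
  have fh: "xmod_hom \<Gamma> M' M f" using f unfolding xmod_eq_split_def xmod_surj_def by auto
  obtain s where sc: "s \<in> carrier (xgrp M) \<rightarrow> carrier (xgrp M')"
    and sf: "\<And>y. y \<in> carrier (xgrp M) \<Longrightarrow> f (s y) = y"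
    and se: "\<And>\<gamma> y. \<gamma> \<in> carrier \<Gamma> \<Longrightarrow> y \<in> carrier (xgrp M) \<Longrightarrow> s (xact M \<gamma> y) = xact M' \<gamma> (s y)"
    using f unfolding xmod_eq_split_def by blast
  show ?thesis unfolding xmod_lifts_def Qd
  proof (intro allI impI)
    fix h assume h: "xmod_hom \<Gamma> P.Q M h"
    have he: "\<And>\<gamma> x. \<gamma> \<in> carrier \<Gamma> \<Longrightarrow> x \<in> carrier (xgrp P.Q) \<Longrightarrow> h (xact P.Q \<gamma> x) = xact M \<gamma> (h x)"
      using h unfolding xmod_hom_def by auto
    have hg: "\<And>g. g \<in> carrier (xgrp L) \<Longrightarrow> h (P.gen g) \<in> carrier (xgrp M)"
      by (rule xmod_hom_carrier[OF h P.gen_carrier])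
    show "\<exists>h'. xmod_hom \<Gamma> P.Q M' h' \<and> (\<forall>x\<in>carrier (xgrp P.Q). f (h' x) = h x)"
    proof (rule P.lift_general[OF M' M fh h, where \<phi>="\<lambda>g. s (h (P.gen g))"])
      fix x assume x: "x \<in> carrier (xgrp L)"
      show "s (h (P.gen x)) \<in> carrier (xgrp M')" using sc hg[OF x] by blast
    next
      fix \<gamma> x assume g: "\<gamma> \<in> carrier \<Gamma>" and x: "x \<in> carrier (xgrp L)"
      have "h (P.gen (xact L \<gamma> x)) = xact M \<gamma> (h (P.gen x))"
        using P.act_gen[OF g x] he[OF g P.gen_carrier[OF x]] by simp
      then show "s (h (P.gen (xact L \<gamma> x))) = xact M' \<gamma> (s (h (P.gen x)))"
        using se[OF g hg[OF x]] by simp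
    next
      fix x assume x: "x \<in> carrier (xgrp L)"
      show "f (s (h (P.gen x))) = h (P.gen x)" by (rule sf[OF hg[OF x]])
    qed
  qed
qed


lemma lifts_retract:
  assumes r: "xmod_retract \<Gamma> Q F" and l: "xmod_lifts \<Gamma> F M' M f"
  shows "xmod_lifts \<Gamma> Q M' M f"
proof -
  obtain i r where i: "xmod_hom \<Gamma> Q F i" and r: "xmod_hom \<Gamma> F Q r"
    and ri: "\<And>x. x \<in> carrier (xgrp Q) \<Longrightarrow> r (i x) = x"
    using r unfolding xmod_retract_def by blast
  show ?thesis unfolding xmod_lifts_def
  proof (intro allI impI)
    fix h assume h: "xmod_hom \<Gamma> Q M h"
    have "xmod_hom \<Gamma> F M (h \<circ> r)" by (rule xmod_hom_comp[OF r h])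
    then obtain k where k: "xmod_hom \<Gamma> F M' k" and fk: "\<And>x. x \<in> carrier (xgrp F) \<Longrightarrow> f (k x) = (h \<circ> r) x"
      using l unfolding xmod_lifts_def by blast
    show "\<exists>h'. xmod_hom \<Gamma> Q M' h' \<and> (\<forall>x\<in>carrier (xgrp Q). f (h' x) = h x)"
    proof (intro exI conjI ballI)
      show "xmod_hom \<Gamma> Q M' (k \<circ> i)" by (rule xmod_hom_comp[OF i k])
      fix x assume x: "x \<in> carrier (xgrp Q)"
      show "f ((k \<circ> i) x) = h x" using fk[OF xmod_hom_carrier[OF i x]] ri[OF x] by simp
    qed
  qed
qed

lemma retract_trans:
  assumes "xmod_retract \<Gamma> R Q" and "xmod_retract \<Gamma> Q F"
  shows "xmod_retract \<Gamma> R F"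
proof -
  obtain i1 r1 where i1: "xmod_hom \<Gamma> R Q i1" and r1: "xmod_hom \<Gamma> Q R r1"
    and ri1: "\<And>x. x \<in> carrier (xgrp R) \<Longrightarrow> r1 (i1 x) = x"
    using assms(1) unfolding xmod_retract_def by blast
  obtain i2 r2 where i2: "xmod_hom \<Gamma> Q F i2" and r2: "xmod_hom \<Gamma> F Q r2"
    and ri2: "\<And>x. x \<in> carrier (xgrp Q) \<Longrightarrow> r2 (i2 x) = x"
    using assms(2) unfolding xmod_retract_def by blast
  show ?thesis unfolding xmod_retract_def
  proof (intro exI conjI ballI)
    show "xmod_hom \<Gamma> R F (i2 \<circ> i1)" by (rule xmod_hom_comp[OF i1 i2])
    show "xmod_hom \<Gamma> F R (r1 \<circ> r2)" by (rule xmod_hom_comp[OF r2 r1])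
    fix x assume x: "x \<in> carrier (xgrp R)"
    show "(r1 \<circ> r2) ((i2 \<circ> i1) x) = x" using ri2[OF xmod_hom_carrier[OF i1 x]] ri1[OF x] by simp
  qed
qed

lemma retract_refl: "xmod_retract \<Gamma> Q Q"
  unfolding xmod_retract_def by (rule exI[of _ id], rule exI[of _ id]) (simp add: xmod_hom_id)

lemma canon_free:
  assumes G: "group \<Gamma>" and M: "crossed_module \<Gamma> M"
  shows "\<exists>f. in_PG TYPE('a) \<Gamma> (free_xmod \<Gamma> (M :: ('a, 'g) xmod)) \<and> xmod_surj \<Gamma> (free_xmod \<Gamma> M) M f"
proof -
  interpret G: group \<Gamma> by (rule G)
  let ?S = "carrier \<Gamma> \<times> carrier (xgrp M)" and ?\<alpha> = "\<lambda>\<gamma>' (\<gamma>, g). (\<gamma>' \<otimes>\<^bsub>\<Gamma>\<^esub> \<gamma>, g)"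
    and ?e = "\<lambda>(\<gamma>, g). xact M \<gamma> g"
  interpret P: pq \<Gamma> M ?S ?\<alpha> ?e by (rule pq_free[OF G M])
  have Qd: "free_xmod \<Gamma> M = P.Q" by (simp add: free_xmod_def)
  have oneM: "\<And>x. x \<in> carrier (xgrp M) \<Longrightarrow> xact M \<one>\<^bsub>\<Gamma>\<^esub> x = x"
    using M by (simp add: crossed_module_def)
  have "in_PG TYPE('a) \<Gamma> P.Q" unfolding in_PG_def
  proof (intro conjI exI[of _ M])
    show "crossed_module \<Gamma> P.Q" by (rule P.Q_cm)
    show "crossed_module \<Gamma> M" by (rule M)
    show "xmod_retract \<Gamma> P.Q (free_xmod \<Gamma> M)" unfolding Qd by (rule retract_refl)
  qed
  moreover have "xmod_surj \<Gamma> P.Q M (qlift (eval_word (xgrp M) ?e))" unfolding xmod_surj_def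
  proof (intro conjI)
    show h: "xmod_hom \<Gamma> P.Q M (qlift (eval_word (xgrp M) ?e))" by (rule P.canon(1))
    show "qlift (eval_word (xgrp M) ?e) ` carrier (xgrp P.Q) = carrier (xgrp M)"
    proof
      show "qlift (eval_word (xgrp M) ?e) ` carrier (xgrp P.Q) \<subseteq> carrier (xgrp M)"
        using xmod_hom_carrier[OF h] by blast
      show "carrier (xgrp M) \<subseteq> qlift (eval_word (xgrp M) ?e) ` carrier (xgrp P.Q)"
      proof
        fix g assume g: "g \<in> carrier (xgrp M)"
        have S1: "(\<one>\<^bsub>\<Gamma>\<^esub>, g) \<in> ?S" using g by simp
        have "qlift (eval_word (xgrp M) ?e) (P.gen (\<one>\<^bsub>\<Gamma>\<^esub>, g)) = g"
          using P.canon(2)[OF S1] oneM[OF g] by simp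
        then show "g \<in> qlift (eval_word (xgrp M) ?e) ` carrier (xgrp P.Q)"
          using P.gen_carrier[OF S1] by (rule rev_image_eqI[rotated, OF sym])
      qed
    qed
  qed
  ultimately show ?thesis unfolding Qd by blast
qed

lemma canon_eqfree:
  assumes G: "group \<Gamma>" and M: "crossed_module \<Gamma> M"
  shows "\<exists>f. in_PGe TYPE('a) \<Gamma> (eq_free_xmod \<Gamma> (M :: ('a, 'g) xmod)) \<and> xmod_eq_split \<Gamma> (eq_free_xmod \<Gamma> M) M f"
proof -
  interpret P: pq \<Gamma> M "carrier (xgrp M)" "xact M" "\<lambda>g. g" by (rule pq_eqf[OF G M])
  have Qd: "eq_free_xmod \<Gamma> M = P.Q" by (simp add: eq_free_xmod_def)
  have "in_PGe TYPE('a) \<Gamma> P.Q" unfolding in_PGe_def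
  proof (intro conjI exI[of _ M])
    show "crossed_module \<Gamma> P.Q" by (rule P.Q_cm)
    show "crossed_module \<Gamma> M" by (rule M)
    show "xmod_retract \<Gamma> P.Q (eq_free_xmod \<Gamma> M)" unfolding Qd by (rule retract_refl)
  qed
  moreover have "xmod_eq_split \<Gamma> P.Q M (qlift (eval_word (xgrp M) (\<lambda>g. g)))" unfolding xmod_eq_split_def xmod_surj_def
  proof (intro conjI)
    show h: "xmod_hom \<Gamma> P.Q M (qlift (eval_word (xgrp M) (\<lambda>g. g)))" by (rule P.canon(1))
    show "qlift (eval_word (xgrp M) (\<lambda>g. g)) ` carrier (xgrp P.Q) = carrier (xgrp M)"
    proof
      show "qlift (eval_word (xgrp M) (\<lambda>g. g)) ` carrier (xgrp P.Q) \<subseteq> carrier (xgrp M)"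
        using xmod_hom_carrier[OF h] by blast
      show "carrier (xgrp M) \<subseteq> qlift (eval_word (xgrp M) (\<lambda>g. g)) ` carrier (xgrp P.Q)"
      proof
        fix g assume g: "g \<in> carrier (xgrp M)"
        have "qlift (eval_word (xgrp M) (\<lambda>g. g)) (P.gen g) = g" by (rule P.canon(2)[OF g])
        then show "g \<in> qlift (eval_word (xgrp M) (\<lambda>g. g)) ` carrier (xgrp P.Q)"
          using P.gen_carrier[OF g] by (rule rev_image_eqI[rotated, OF sym])
      qed
    qed
    show "\<exists>s. s \<in> carrier (xgrp M) \<rightarrow> carrier (xgrp P.Q) \<and>
          (\<forall>y\<in>carrier (xgrp M). qlift (eval_word (xgrp M) (\<lambda>g. g)) (s y) = y) \<and>
          (\<forall>\<gamma>\<in>carrier \<Gamma>. \<forall>y\<in>carrier (xgrp M). s (xact M \<gamma> y) = xact P.Q \<gamma> (s y))"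
    proof (intro exI conjI ballI)
      show "P.gen \<in> carrier (xgrp M) \<rightarrow> carrier (xgrp P.Q)" using P.gen_carrier by blast
      fix y assume y: "y \<in> carrier (xgrp M)"
      show "qlift (eval_word (xgrp M) (\<lambda>g. g)) (P.gen y) = y" by (rule P.canon(2)[OF y])
    next
      fix \<gamma> y assume g: "\<gamma> \<in> carrier \<Gamma>" and y: "y \<in> carrier (xgrp M)"
      show "P.gen (xact M \<gamma> y) = xact P.Q \<gamma> (P.gen y)" by (rule P.act_gen[OF g y, symmetric])
    qed
  qed
  ultimately show ?thesis unfolding Qd by blast
qed

theorem proposition6p2:
  fixes \<Gamma> :: "'g monoid"
  assumes "group \<Gamma>"
  shows
   \<comment> \<open>(a) lifting property of free crossed modules against surjective morphisms\<close>
   "(\<forall>(M' :: ('b, 'g) xmod) (M :: ('a, 'g) xmod) (L :: ('l, 'g) xmod) f.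
       crossed_module \<Gamma> M' \<and> crossed_module \<Gamma> M \<and> crossed_module \<Gamma> L \<and>
       xmod_surj \<Gamma> M' M f \<longrightarrow> xmod_lifts \<Gamma> (free_xmod \<Gamma> L) M' M f)
    \<and> \<comment> \<open>(a) P_Gamma with surjective morphisms is a projective class\<close>
    (\<forall>(Q :: ('q, 'g) xmod) (M' :: ('b, 'g) xmod) (M :: ('a, 'g) xmod) f.
       in_PG TYPE('l) \<Gamma> Q \<and> crossed_module \<Gamma> M' \<and> crossed_module \<Gamma> M \<and>
       xmod_surj \<Gamma> M' M f \<longrightarrow> xmod_lifts \<Gamma> Q M' M f)
    \<and> (\<forall>(Q :: ('q, 'g) xmod) (R :: ('r, 'g) xmod).
       in_PG TYPE('l) \<Gamma> Q \<and> crossed_module \<Gamma> R \<and> xmod_retract \<Gamma> R Q \<longrightarrow> in_PG TYPE('l) \<Gamma> R)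
    \<and> (\<forall>M :: ('a, 'g) xmod. crossed_module \<Gamma> M \<longrightarrow>
       (\<exists>(Q :: (('g \<times> 'a) word set, 'g) xmod) f. in_PG TYPE('a) \<Gamma> Q \<and> xmod_surj \<Gamma> Q M f))
    \<and> \<comment> \<open>(b) lifting property of equivariant free crossed modules against surjections
          with an equivariant set-theoretic section\<close>
    (\<forall>(M' :: ('b, 'g) xmod) (M :: ('a, 'g) xmod) (L :: ('l, 'g) xmod) f.
       crossed_module \<Gamma> M' \<and> crossed_module \<Gamma> M \<and> crossed_module \<Gamma> L \<and>
       xmod_eq_split \<Gamma> M' M f \<longrightarrow> xmod_lifts \<Gamma> (eq_free_xmod \<Gamma> L) M' M f)
    \<and> \<comment> \<open>(b) P_Gamma-e with such morphisms is a projective class\<close>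
    (\<forall>(Q :: ('q, 'g) xmod) (M' :: ('b, 'g) xmod) (M :: ('a, 'g) xmod) f.
       in_PGe TYPE('l) \<Gamma> Q \<and> crossed_module \<Gamma> M' \<and> crossed_module \<Gamma> M \<and>
       xmod_eq_split \<Gamma> M' M f \<longrightarrow> xmod_lifts \<Gamma> Q M' M f)
    \<and> (\<forall>(Q :: ('q, 'g) xmod) (R :: ('r, 'g) xmod).
       in_PGe TYPE('l) \<Gamma> Q \<and> crossed_module \<Gamma> R \<and> xmod_retract \<Gamma> R Q \<longrightarrow> in_PGe TYPE('l) \<Gamma> R)
    \<and> (\<forall>M :: ('a, 'g) xmod. crossed_module \<Gamma> M \<longrightarrow>
       (\<exists>(Q :: ('a word set, 'g) xmod) f. in_PGe TYPE('a) \<Gamma> Q \<and> xmod_eq_split \<Gamma> Q M f))"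
proof (intro conjI allI impI)
  fix M' :: "('b, 'g) xmod" and M :: "('a, 'g) xmod" and L :: "('l, 'g) xmod" and f
  assume H: "crossed_module \<Gamma> M' \<and> crossed_module \<Gamma> M \<and> crossed_module \<Gamma> L \<and> xmod_surj \<Gamma> M' M f"
  then show "xmod_lifts \<Gamma> (free_xmod \<Gamma> L) M' M f" using lift_free[OF assms] by blast
next
  fix Q :: "('q, 'g) xmod" and M' :: "('b, 'g) xmod" and M :: "('a, 'g) xmod" and f
  assume H: "in_PG TYPE('l) \<Gamma> Q \<and> crossed_module \<Gamma> M' \<and> crossed_module \<Gamma> M \<and> xmod_surj \<Gamma> M' M f"
  then obtain L :: "('l, 'g) xmod" where L: "crossed_module \<Gamma> L" and r: "xmod_retract \<Gamma> Q (free_xmod \<Gamma> L)"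
    unfolding in_PG_def by blast
  have "xmod_lifts \<Gamma> (free_xmod \<Gamma> L) M' M f" using lift_free[OF assms _ _ L] H by blast
  then show "xmod_lifts \<Gamma> Q M' M f" by (rule lifts_retract[OF r])
next
  fix Q :: "('q, 'g) xmod" and R :: "('r, 'g) xmod"
  assume H: "in_PG TYPE('l) \<Gamma> Q \<and> crossed_module \<Gamma> R \<and> xmod_retract \<Gamma> R Q"
  then obtain L :: "('l, 'g) xmod" where L: "crossed_module \<Gamma> L" and r: "xmod_retract \<Gamma> Q (free_xmod \<Gamma> L)"
    unfolding in_PG_def by blast
  have "xmod_retract \<Gamma> R (free_xmod \<Gamma> L)" using retract_trans r H by blast
  then show "in_PG TYPE('l) \<Gamma> R" unfolding in_PG_def using H L by blast
next
  fix M :: "('a, 'g) xmod"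
  assume "crossed_module \<Gamma> M"
  then show "\<exists>(Q :: (('g \<times> 'a) word set, 'g) xmod) f. in_PG TYPE('a) \<Gamma> Q \<and> xmod_surj \<Gamma> Q M f"
    using canon_free[OF assms] by blast
next
  fix M' :: "('b, 'g) xmod" and M :: "('a, 'g) xmod" and L :: "('l, 'g) xmod" and f
  assume H: "crossed_module \<Gamma> M' \<and> crossed_module \<Gamma> M \<and> crossed_module \<Gamma> L \<and> xmod_eq_split \<Gamma> M' M f"
  then show "xmod_lifts \<Gamma> (eq_free_xmod \<Gamma> L) M' M f" using lift_eqfree[OF assms] by blast
next
  fix Q :: "('q, 'g) xmod" and M' :: "('b, 'g) xmod" and M :: "('a, 'g) xmod" and f
  assume H: "in_PGe TYPE('l) \<Gamma> Q \<and> crossed_module \<Gamma> M' \<and> crossed_module \<Gamma> M \<and> xmod_eq_split \<Gamma> M' M f"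
  then obtain L :: "('l, 'g) xmod" where L: "crossed_module \<Gamma> L" and r: "xmod_retract \<Gamma> Q (eq_free_xmod \<Gamma> L)"
    unfolding in_PGe_def by blast
  have "xmod_lifts \<Gamma> (eq_free_xmod \<Gamma> L) M' M f" using lift_eqfree[OF assms _ _ L] H by blast
  then show "xmod_lifts \<Gamma> Q M' M f" by (rule lifts_retract[OF r])
next
  fix Q :: "('q, 'g) xmod" and R :: "('r, 'g) xmod"
  assume H: "in_PGe TYPE('l) \<Gamma> Q \<and> crossed_module \<Gamma> R \<and> xmod_retract \<Gamma> R Q"
  then obtain L :: "('l, 'g) xmod" where L: "crossed_module \<Gamma> L" and r: "xmod_retract \<Gamma> Q (eq_free_xmod \<Gamma> L)"
    unfolding in_PGe_def by blast
  have "xmod_retract \<Gamma> R (eq_free_xmod \<Gamma> L)" using retract_trans r H by blast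
  then show "in_PGe TYPE('l) \<Gamma> R" unfolding in_PGe_def using H L by blast
next
  fix M :: "('a, 'g) xmod"
  assume "crossed_module \<Gamma> M"
  then show "\<exists>(Q :: ('a word set, 'g) xmod) f. in_PGe TYPE('a) \<Gamma> Q \<and> xmod_eq_split \<Gamma> Q M f"
    using canon_eqfree[OF assms] by blast
qed

end
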